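(* Let $N\geq 2$ and let $\sigma_1,\dots,\sigma_N:\mathbb{R}\to\mathbb{R}$ be functions admitting a Taylor decomposition on $\mathbb{R}$, i.e. $\sigma_i(x)=\sum_{t\ge0}\frac{\sigma_i^{(t)}(0)}{t!}x^t$ for all $x\in\mathbb{R}$. For $i=1,\dots,N$ define $f_i(x)=\sum_{t\geq 0}\frac{|\sigma_i^{(t)}(0)|}{t!}x^t$. Then the function on $\mathcal{I}\times\mathcal{I}$ $$K_N(\mathbf{X},\mathbf{X}'):=f_N\circ\cdots\circ f_2\Big(\sum_{i=1}^{n} f_1\big(\langle \mathbf{X}_i,\mathbf{X}'_i\rangle_{\mathbb{R}^{d}}\big)\Big)$$ is a positive (semi-)definite kernel on $\mathcal{I}$, and its RKHS $H_N$ contains $\mathcal{F}_{(\sigma_i)_{i=1}^N}$, the set of all functions computed by convolutional networks with activations $\sigma_1,\dots,\sigma_N$ (for every choice of numbers of filters and weights). Moreover, if $\sigma_i^{(t)}(0)\neq 0$ for all $i\in\{1,\dots,N\}$ and all $t\geq 0$, then $K_N$ is $c$-universal on $\mathcal{I}$, i.e. $K_N$ is continuous and $H_N$ is dense in $\mathcal{C}(\mathcal{I})$ for the uniform norm.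
   Context: Let $d\geq 2$, $n\geq 1$, $S^{d-1}\subset\mathbb{R}^d$ the unit sphere and $\mathcal{I}=(S^{d-1})^n$; write $\mathbf{X}=(\mathbf{X}_1,\dots,\mathbf{X}_n)\in\mathcal{I}$ with $\mathbf{X}_i\in S^{d-1}$ (normalized image patches). Convolutional network: fix $N\ge 2$, activations $\sigma_1,\dots,\sigma_N$, and integers $d_1=d$, $p_1=1$, $n_1=n$; for $k=2,\dots,N$ integers $p_k,d_k,n_k\geq1$; an integer $p_{N+1}\ge1$; and $d_{N+1}=n_N$, $n_{N+1}=1$, with $n_k+d_k-1\le n_{k-1}$ for $k=2,\dots,N+1$. Fix real pooling factors $(\gamma^k_{i,j})_{i,j=1}^{n_k}$ for $k=1,\dots,N$. Weights: $W^k\in\mathbb{R}^{p_{k+1}\times d_kp_k}$ with rows $w^k_1,\dots,w^k_{p_{k+1}}\in\mathbb{R}^{d_kp_k}$ for $k=1,\dots,N$, and $W^{N+1}\in\mathbb{R}^{d_{N+1}p_{N+1}}$. Given $\mathbf{X}^1\in\mathcal{I}$ (viewed as $n_1$ vectors $\mathbf{X}^1_q\in\mathbb{R}^{d_1p_1}$), define recursively for $k=1,\dots,N$: $Z^{k+1}(i,j)=\sum_{q=1}^{n_k}\gamma^k_{i,q}\,\sigma_k(\langle \mathbf{X}^k_q,w^k_j\rangle)$ for $i\le n_k$, $j\le p_{k+1}$; $U_i=(Z^{k+1}(i,1),\dots,Z^{k+1}(i,p_{k+1}))\in\mathbb{R}^{p_{k+1}}$; and $\mathbf{X}^{k+1}_q=(U_q,U_{q+1},\dots,U_{q+d_{k+1}-1})\in\mathbb{R}^{d_{k+1}p_{k+1}}$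 for $q=1,\dots,n_{k+1}$ (patch extraction). The network function is $\mathcal{N}_W(\mathbf{X}^1)=\langle \mathbf{X}^{N+1}_1,W^{N+1}\rangle$. $\mathcal{F}_{(\sigma_i)_{i=1}^N,(p_i)}$ is the set of all $\mathcal{N}_W$ over all weights, and $\mathcal{F}_{(\sigma_i)_{i=1}^N}$ is the union of these sets over all choices of the numbers of filters $p_2,\dots,p_{N+1}\ge1$ (the sizes $d_k,n_k$ and pooling factors being fixed arbitrarily). *)

theory Defs
  imports "HOL-Analysis.Analysis"
begin

text \<open>Points of the input space: an image X = (X_1,...,X_n) with X_q in S^(d-1) is
  encoded as X :: nat => nat => real, X q j being coordinate j (j < d) of patch q (q < n),
  zero-based, and extended by zero outside the index range.  The topology used is the
  product topology on functions, which on this set coincides with the Euclidean one.\<close>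

type_synonym image = "nat \<Rightarrow> nat \<Rightarrow> real"

definition sphere_images :: "nat \<Rightarrow> nat \<Rightarrow> image set" where
  "sphere_images d n = {X. (\<forall>q<n. (\<Sum>j<d. (X q j)\<^sup>2) = 1) \<and>
                            (\<forall>q j. (n \<le> q \<or> d \<le> j) \<longrightarrow> X q j = 0)}"

definition taylor_decomp :: "(real \<Rightarrow> real) \<Rightarrow> bool" where
  "taylor_decomp \<sigma> \<longleftrightarrow>
     (\<forall>t x. ((deriv ^^ t) \<sigma>) differentiable (at x)) \<and>
     (\<forall>x. (\<lambda>t. (deriv ^^ t) \<sigma> 0 / fact t * x ^ t) sums \<sigma> x)"

definition abs_series :: "(real \<Rightarrow> real) \<Rightarrow> real \<Rightarrow> real" where
  "abs_series \<sigma> x = (\<Sum>t. \<bar>(deriv ^^ t) \<sigma> 0\<bar> / fact t * x ^ t)"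

definition cnn_kernel ::
  "nat \<Rightarrow> nat \<Rightarrow> nat \<Rightarrow> (nat \<Rightarrow> real \<Rightarrow> real) \<Rightarrow> image \<Rightarrow> image \<Rightarrow> real" where
  "cnn_kernel d n N \<sigma> X X' =
     fold (\<lambda>i y. abs_series (\<sigma> i) y) [2..<Suc N]
       (\<Sum>i<n. abs_series (\<sigma> 1) (\<Sum>j<d. X i j * X' i j))"

definition psd_kernel :: "'a set \<Rightarrow> ('a \<Rightarrow> 'a \<Rightarrow> real) \<Rightarrow> bool" where
  "psd_kernel S K \<longleftrightarrow>
     (\<forall>x\<in>S. \<forall>y\<in>S. K x y = K y x) \<and>
     (\<forall>(m::nat) (a::nat \<Rightarrow> real) (x::nat \<Rightarrow> 'a). (\<forall>i<m. x i \<in> S) \<longrightarrow>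
        0 \<le> (\<Sum>i<m. \<Sum>j<m. a i * a j * K (x i) (x j)))"

text \<open>RKHS via the standard (Aronszajn) construction: elements of the pre-Hilbert space
  H_0 = span {K(x,.)} are represented by finite lists of (coefficient, point);
  H_K consists of the pointwise limits on S of H_0-Cauchy sequences.\<close>
definition h0_fun :: "('a \<Rightarrow> 'a \<Rightarrow> real) \<Rightarrow> (real \<times> 'a) list \<Rightarrow> 'a \<Rightarrow> real" where
  "h0_fun K r y = (\<Sum>(c, x)\<leftarrow>r. c * K x y)"

definition h0_sqnorm :: "('a \<Rightarrow> 'a \<Rightarrow> real) \<Rightarrow> (real \<times> 'a) list \<Rightarrow> real" where
  "h0_sqnorm K r = (\<Sum>(c, x)\<leftarrow>r. \<Sum>(c', x')\<leftarrow>r. c * c' * K x x')"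

definition h0_diff :: "(real \<times> 'a) list \<Rightarrow> (real \<times> 'a) list \<Rightarrow> (real \<times> 'a) list" where
  "h0_diff r r' = r @ map (\<lambda>(c, x). (- c, x)) r'"

definition rkhs :: "'a set \<Rightarrow> ('a \<Rightarrow> 'a \<Rightarrow> real) \<Rightarrow> ('a \<Rightarrow> real) set" where
  "rkhs S K = {f. \<exists>R :: nat \<Rightarrow> (real \<times> 'a) list.
      (\<forall>m. snd ` set (R m) \<subseteq> S) \<and>
      (\<forall>\<epsilon>>0. \<exists>M. \<forall>m\<ge>M. \<forall>m'\<ge>M. h0_sqnorm K (h0_diff (R m) (R m')) < \<epsilon>) \<and>
      (\<forall>x\<in>S. (\<lambda>m. h0_fun K (R m) x) \<longlonglongrightarrow> f x)}"

definition c_universal :: "('a::topological_space) set \<Rightarrow> ('a \<Rightarrow> 'a \<Rightarrow> real) \<Rightarrow> bool" where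
  "c_universal S K \<longleftrightarrow>
     continuous_on (S \<times> S) (\<lambda>(x, y). K x y) \<and>
     (\<forall>g. continuous_on S g \<longrightarrow>
        (\<forall>\<epsilon>>0. \<exists>h\<in>rkhs S K. \<forall>x\<in>S. \<bar>g x - h x\<bar> < \<epsilon>))"

text \<open>Convolutional networks (zero-based indices for patches/filters/coordinates, layer
  index k 1-based).  A layer representation X^k :: nat => nat => real, X^k q l being
  coordinate l (l < d_k p_k) of patch q (q < n_k).
  Z^{k+1}(i,j) = sum_{q<n_k} gamma^k_{i,q} sigma_k(<X^k_q, w^k_j>) and
  X^{k+1}_q = (U_q, ..., U_{q+d_{k+1}-1}), i.e. coordinate l of X^{k+1}_q is
  Z^{k+1}(q + l div p_{k+1}, l mod p_{k+1}).\<close>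
definition cnn_layer ::
  "(real \<Rightarrow> real) \<Rightarrow> (nat \<Rightarrow> nat \<Rightarrow> real) \<Rightarrow> (nat \<Rightarrow> nat \<Rightarrow> real) \<Rightarrow>
   nat \<Rightarrow> nat \<Rightarrow> nat \<Rightarrow> nat \<Rightarrow> image \<Rightarrow> image" where
  "cnn_layer \<sigma>k \<gamma>k Wk dk pk nk pk1 Xk =
     (\<lambda>q l. let Z = (\<lambda>i j. \<Sum>q'<nk. \<gamma>k i q' * \<sigma>k (\<Sum>m<dk * pk. Xk q' m * Wk j m))
            in Z (q + l div pk1) (l mod pk1))"

text \<open>cnn_state ... k X = X^{k+1}; parameters indexed by the layer k (1-based):
  sigma k, gamma k i j, W k j m (row j of W^k), dd k = d_k, p k = p_k, nn k = n_k.\<close>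
primrec cnn_state ::
  "(nat \<Rightarrow> real \<Rightarrow> real) \<Rightarrow> (nat \<Rightarrow> nat \<Rightarrow> nat \<Rightarrow> real) \<Rightarrow> (nat \<Rightarrow> nat \<Rightarrow> nat \<Rightarrow> real) \<Rightarrow>
   (nat \<Rightarrow> nat) \<Rightarrow> (nat \<Rightarrow> nat) \<Rightarrow> (nat \<Rightarrow> nat) \<Rightarrow> nat \<Rightarrow> image \<Rightarrow> image" where
  "cnn_state \<sigma> \<gamma> W dd p nn 0 X = X"
| "cnn_state \<sigma> \<gamma> W dd p nn (Suc k) X =
     cnn_layer (\<sigma> (Suc k)) (\<gamma> (Suc k)) (W (Suc k)) (dd (Suc k)) (p (Suc k)) (nn (Suc k))
       (p (Suc (Suc k))) (cnn_state \<sigma> \<gamma> W dd p nn k X)"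

definition cnn_net ::
  "nat \<Rightarrow> (nat \<Rightarrow> real \<Rightarrow> real) \<Rightarrow> (nat \<Rightarrow> nat \<Rightarrow> nat \<Rightarrow> real) \<Rightarrow> (nat \<Rightarrow> nat \<Rightarrow> nat \<Rightarrow> real) \<Rightarrow>
   (nat \<Rightarrow> real) \<Rightarrow> (nat \<Rightarrow> nat) \<Rightarrow> (nat \<Rightarrow> nat) \<Rightarrow> (nat \<Rightarrow> nat) \<Rightarrow> image \<Rightarrow> real" where
  "cnn_net N \<sigma> \<gamma> W Wout dd p nn X =
     (\<Sum>l<dd (Suc N) * p (Suc N). cnn_state \<sigma> \<gamma> W dd p nn N X 0 l * Wout l)"

definition cnn_sizes_ok :: "nat \<Rightarrow> nat \<Rightarrow> nat \<Rightarrow> (nat \<Rightarrow> nat) \<Rightarrow> (nat \<Rightarrow> nat) \<Rightarrow> bool" where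
  "cnn_sizes_ok d n N dd nn \<longleftrightarrow>
     dd 1 = d \<and> nn 1 = n \<and> dd (Suc N) = nn N \<and> nn (Suc N) = 1 \<and>
     (\<forall>k\<in>{2..N}. 1 \<le> dd k \<and> 1 \<le> nn k) \<and>
     (\<forall>k\<in>{2..Suc N}. nn k + dd k - 1 \<le> nn (k - 1))"

definition cnn_family ::
  "nat \<Rightarrow> (nat \<Rightarrow> real \<Rightarrow> real) \<Rightarrow> (nat \<Rightarrow> nat) \<Rightarrow> (nat \<Rightarrow> nat) \<Rightarrow>
   (nat \<Rightarrow> nat \<Rightarrow> nat \<Rightarrow> real) \<Rightarrow> (image \<Rightarrow> real) set" where
  "cnn_family N \<sigma> dd nn \<gamma> =
     {cnn_net N \<sigma> \<gamma> W Wout dd p nn | p W Wout.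
        p 1 = 1 \<and> (\<forall>k\<in>{2..Suc N}. 1 \<le> p k)}"

end

theory Submission
  imports Defs
begin


definition pts :: "(real \<times> 'a) list \<Rightarrow> 'a set" where "pts r = snd ` set r"
definition ip :: "('a \<Rightarrow> 'a \<Rightarrow> real) \<Rightarrow> (real \<times> 'a) list \<Rightarrow> (real \<times> 'a) list \<Rightarrow> real" where
  "ip K r s = (\<Sum>p\<leftarrow>r. \<Sum>q\<leftarrow>s. fst p * fst q * K (snd p) (snd q))"
definition lin :: "('a \<Rightarrow> real) \<Rightarrow> (real \<times> 'a) list \<Rightarrow> real" where
  "lin g r = (\<Sum>p\<leftarrow>r. fst p * g (snd p))"
definition symk :: "'a set \<Rightarrow> ('a \<Rightarrow> 'a \<Rightarrow> real) \<Rightarrow> bool" where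
  "symk S K \<longleftrightarrow> (\<forall>x\<in>S. \<forall>y\<in>S. K x y = K y x)"
definition posk :: "'a set \<Rightarrow> ('a \<Rightarrow> 'a \<Rightarrow> real) \<Rightarrow> bool" where
  "posk S K \<longleftrightarrow> (\<forall>r. pts r \<subseteq> S \<longrightarrow> 0 \<le> ip K r r)"
definition domk :: "'a set \<Rightarrow> ('a \<Rightarrow> 'a \<Rightarrow> real) \<Rightarrow> ('a \<Rightarrow> real) \<Rightarrow> real \<Rightarrow> bool" where
  "domk S K g C \<longleftrightarrow> 0 \<le> C \<and> symk S K \<and> posk S K \<and>
     (\<forall>r. pts r \<subseteq> S \<longrightarrow> (lin g r)\<^sup>2 \<le> C * ip K r r)"
definition scl :: "real \<Rightarrow> (real \<times> 'a) list \<Rightarrow> (real \<times> 'a) list" where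
  "scl c r = map (\<lambda>p. (c * fst p, snd p)) r"
definition scf :: "('a \<Rightarrow> real) \<Rightarrow> (real \<times> 'a) list \<Rightarrow> (real \<times> 'a) list" where
  "scf u r = map (\<lambda>p. (fst p * u (snd p), snd p)) r"

lemma pts_simps[simp]: "pts [] = {}" "pts (p # r) = insert (snd p) (pts r)"
  "pts (r @ s) = pts r \<union> pts s" "pts (scl c r) = pts r" "pts (scf u r) = pts r"
  by (auto simp: pts_def scl_def scf_def image_image)

lemma ip_Nil[simp]: "ip K [] s = 0" "ip K r [] = 0"
  by (simp_all add: ip_def)

lemma ip_Cons_left: "ip K (p # r) s = (\<Sum>q\<leftarrow>s. fst p * fst q * K (snd p) (snd q)) + ip K r s"
  by (simp add: ip_def)

lemma ip_Cons_right: "ip K r (q # s) = (\<Sum>p\<leftarrow>r. fst p * fst q * K (snd p) (snd q)) + ip K r s"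
  by (simp add: ip_def sum_list_addf)

lemma ip_append_left: "ip K (r @ r') s = ip K r s + ip K r' s"
  by (simp add: ip_def)

lemma ip_append_right: "ip K r (s @ s') = ip K r s + ip K r s'"
  by (simp add: ip_def sum_list_addf)

lemma ip_scl_left: "ip K (scl c r) s = c * ip K r s"
  by (simp add: ip_def scl_def o_def sum_list_const_mult mult.assoc)

lemma ip_scl_right: "ip K r (scl c s) = c * ip K r s"
  by (simp add: ip_def scl_def o_def sum_list_const_mult[symmetric] mult_ac)

lemma ip_scf: "ip K (scf u r) (scf v s) = ip (\<lambda>x y. u x * K x y * v y) r s"
  by (simp add: ip_def scf_def o_def mult_ac)

lemma ip_add_kernel: "ip (\<lambda>x y. K x y + L x y) r s = ip K r s + ip L r s"
  by (simp add: ip_def distrib_left sum_list_addf)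

lemma ip_diff_kernel: "ip (\<lambda>x y. K x y - L x y) r s = ip K r s - ip L r s"
  by (simp add: ip_def right_diff_distrib sum_list_subtractf)

lemma ip_cmult_kernel: "ip (\<lambda>x y. c * K x y) r s = c * ip K r s"
  by (simp add: ip_def sum_list_const_mult[symmetric] mult_ac)

lemma ip_sum_kernel: "ip (\<lambda>x y. \<Sum>t\<in>A. F t x y) r s = (\<Sum>t\<in>A. ip (F t) r s)"
proof (induction A rule: infinite_finite_induct)
  case (infinite A) then show ?case by (simp add: ip_def)
next
  case empty then show ?case by (simp add: ip_def)
next
  case (insert t A) then show ?case by (simp add: ip_add_kernel)
qed

lemma ip_cong: "(\<And>x y. x \<in> pts r \<Longrightarrow> y \<in> pts s \<Longrightarrow> K x y = L x y) \<Longrightarrow> ip K r s = ip L r s"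
  unfolding ip_def pts_def
  by (intro arg_cong[where f=sum_list] map_cong refl) auto

lemma lin_Nil[simp]: "lin g [] = 0" by (simp add: lin_def)
lemma lin_Cons: "lin g (p # r) = fst p * g (snd p) + lin g r" by (simp add: lin_def)
lemma lin_append: "lin g (r @ s) = lin g r + lin g s" by (simp add: lin_def)
lemma lin_scl: "lin g (scl c r) = c * lin g r"
  by (simp add: lin_def scl_def o_def sum_list_const_mult mult.assoc)
lemma lin_scf: "lin g (scf u r) = lin (\<lambda>x. u x * g x) r"
  by (simp add: lin_def scf_def o_def mult_ac)
lemma lin_add: "lin (\<lambda>x. g x + h x) r = lin g r + lin h r"
  by (simp add: lin_def distrib_left sum_list_addf)
lemma lin_cmult: "lin (\<lambda>x. c * g x) r = c * lin g r"
  by (simp add: lin_def sum_list_const_mult[symmetric] mult_ac)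
lemma lin_sum: "lin (\<lambda>x. \<Sum>t\<in>A. F t x) r = (\<Sum>t\<in>A. lin (F t) r)"
proof (induction A rule: infinite_finite_induct)
  case (infinite A) then show ?case by (simp add: lin_def)
next
  case empty then show ?case by (simp add: lin_def)
next
  case (insert t A) then show ?case by (simp add: lin_add)
qed
lemma lin_cong: "(\<And>x. x \<in> pts r \<Longrightarrow> g x = h x) \<Longrightarrow> lin g r = lin h r"
  unfolding lin_def pts_def
  by (intro arg_cong[where f=sum_list] map_cong refl) auto

lemma ip_prod: "ip (\<lambda>x y. g x * h y) r s = lin g r * lin h s"
proof -
  have "ip (\<lambda>x y. g x * h y) r s = (\<Sum>p\<leftarrow>r. (fst p * g (snd p)) * lin h s)"
    unfolding ip_def lin_def
    by (intro arg_cong[where f=sum_list] map_cong refl) (simp add: sum_list_const_mult[symmetric] mult_ac)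
  also have "\<dots> = lin g r * lin h s" unfolding lin_def by (simp add: sum_list_mult_const)
  finally show ?thesis .
qed

lemma ip_sym: "symk S K \<Longrightarrow> pts r \<subseteq> S \<Longrightarrow> pts s \<subseteq> S \<Longrightarrow> ip K r s = ip K s r"
proof -
  assume a: "symk S K" "pts r \<subseteq> S" "pts s \<subseteq> S"
  have "ip K r s = (\<Sum>q\<leftarrow>s. \<Sum>p\<leftarrow>r. fst p * fst q * K (snd p) (snd q))"
    unfolding ip_def
  proof (induction r)
    case Nil then show ?case by simp
  next
    case (Cons a r) then show ?case by (simp add: sum_list_addf)
  qed
  also have "\<dots> = ip K s r" unfolding ip_def
    using a by (intro arg_cong[where f=sum_list] map_cong refl)
      (auto simp: symk_def pts_def mult_ac subset_iff)
  finally show ?thesis .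
qed


lemma sum_list_zeroI: "(\<And>q. q \<in> set s \<Longrightarrow> f q = (0::real)) \<Longrightarrow> sum_list (map f s) = 0"
  by (induction s) auto

lemma ip_single_right: "ip K s [(c, x)] = c * lin (\<lambda>y. K y x) s"
  by (simp add: ip_def lin_def sum_list_const_mult[symmetric] mult_ac)

lemma ip_single_left: "ip K [(c, x)] s = c * lin (\<lambda>y. K x y) s"
  by (simp add: ip_def lin_def sum_list_const_mult[symmetric] mult_ac)

lemma posk_one: "posk S (\<lambda>_ _. 1)"
  unfolding posk_def
proof (intro allI impI)
  fix r :: "(real \<times> 'a) list"
  have "ip (\<lambda>_ _. 1) r r = lin (\<lambda>_. 1) r * lin (\<lambda>_. 1) r"
    using ip_prod[of "\<lambda>_. 1" "\<lambda>_. 1" r r] by simp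
  then show "0 \<le> ip (\<lambda>_ _. 1) r r" by simp
qed

lemma posk_diag: "posk S B \<Longrightarrow> x \<in> S \<Longrightarrow> 0 \<le> B x x"
  unfolding posk_def by (drule spec[of _ "[(1, x)]"]) (simp add: ip_def)

lemma zero_col:
  assumes "posk S B" "symk S B" "x0 \<in> S" "y \<in> S" "B x0 x0 = 0"
  shows "B y x0 = 0"
proof (rule ccontr)
  assume ne: "B y x0 \<noteq> 0"
  define t where "t = - (B y y + 1) / (2 * B y x0)"
  have "0 \<le> ip B [(1, y), (t, x0)] [(1, y), (t, x0)]"
    using assms unfolding posk_def by auto
  also have "ip B [(1, y), (t, x0)] [(1, y), (t, x0)] = B y y + 2 * t * B y x0"
    using assms by (simp add: ip_def symk_def algebra_simps)
  also have "\<dots> = -1" using ne by (simp add: t_def field_simps)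
  finally show False by simp
qed

lemma schur:
  assumes A: "posk S A"
  shows "posk S B \<Longrightarrow> symk S B \<Longrightarrow> pts r \<subseteq> S \<Longrightarrow> 0 \<le> ip (\<lambda>x y. A x y * B x y) r r"
proof (induction r arbitrary: B)
  case Nil then show ?case by simp
next
  case (Cons p r)
  define x0 where "x0 = snd p"
  have x0S: "x0 \<in> S" using Cons.prems by (simp add: x0_def)
  have rS: "pts r \<subseteq> S" using Cons.prems by simp
  define b where "b = B x0 x0"
  have b0: "0 \<le> b" using posk_diag[OF Cons.prems(1) x0S] by (simp add: b_def)
  define u where "u y = (if b = 0 then 0 else B y x0 / sqrt b)" for y
  define B' where "B' y z = B y z - u y * u z" for y z
  have sqb: "sqrt b * sqrt b = b" using b0 by simp
  have col: "B' y x0 = 0 \<and> B' x0 y = 0" if "y \<in> S" for y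
  proof (cases "b = 0")
    case True
    then have "B y x0 = 0" using zero_col[OF Cons.prems(1,2) x0S that] b_def by simp
    moreover have "B x0 y = B y x0" using Cons.prems(2) that x0S by (simp add: symk_def)
    ultimately show ?thesis using True by (simp add: B'_def u_def)
  next
    case False
    then have bp: "0 < b" using b0 by simp
    have "B x0 y = B y x0" using Cons.prems(2) that x0S by (simp add: symk_def)
    moreover have "u y * u x0 = B y x0" "u x0 * u y = B y x0"
      using False bp sqb by (simp_all add: u_def b_def[symmetric] field_simps)
    ultimately show ?thesis by (simp add: B'_def)
  qed
  have symB': "symk S B'"
    using Cons.prems(2) by (simp add: symk_def B'_def mult.commute)
  have posB': "posk S B'"
    unfolding posk_def
  proof (intro allI impI)
    fix s :: "(real \<times> _) list" assume sS: "pts s \<subseteq> S"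
    have e1: "ip B' s s = ip B s s - lin u s * lin u s"
      unfolding B'_def by (simp add: ip_diff_kernel ip_prod)
    show "0 \<le> ip B' s s"
    proof (cases "b = 0")
      case True then have "lin u s = 0" by (simp add: u_def lin_def)
      then show ?thesis using e1 Cons.prems(1) sS by (simp add: posk_def)
    next
      case False
      then have bp: "0 < b" using b0 by simp
      define \<beta> where "\<beta> = lin (\<lambda>y. B y x0) s"
      have "u = (\<lambda>y. inverse (sqrt b) * B y x0)"
        using False by (auto simp: u_def fun_eq_iff field_simps)
      then have lu: "lin u s = \<beta> / sqrt b"
        using lin_cmult[of "inverse (sqrt b)" "\<lambda>y. B y x0" s] by (simp add: \<beta>_def divide_inverse mult.commute)
      define t where "t = - \<beta> / b"
      have "0 \<le> ip B (s @ [(t, x0)]) (s @ [(t, x0)])"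
        using Cons.prems(1) sS x0S by (simp add: posk_def)
      also have "ip B (s @ [(t, x0)]) (s @ [(t, x0)]) = ip B s s + ip B s [(t, x0)] + ip B [(t, x0)] s + ip B [(t,x0)] [(t,x0)]"
        by (simp add: ip_append_left ip_append_right)
      also have "ip B [(t, x0)] s = ip B s [(t, x0)]"
        using ip_sym[OF Cons.prems(2)] sS x0S by auto
      also have "ip B s [(t, x0)] = t * \<beta>" by (simp add: ip_single_right \<beta>_def)
      also have "ip B [(t,x0)] [(t,x0)] = t * t * b" by (simp add: ip_def b_def)
      finally have "0 \<le> ip B s s - \<beta> * \<beta> / b"
        using bp by (simp add: t_def field_simps)
      moreover have "lin u s * lin u s = \<beta> * \<beta> / b"
        using lu sqb by (simp add: field_simps)
      ultimately show ?thesis using e1 by simp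
    qed
  qed
  have "ip (\<lambda>x y. A x y * B x y) (p # r) (p # r) =
        ip (\<lambda>x y. A x y * B' x y + u x * A x y * u y) (p # r) (p # r)"
    by (intro ip_cong) (simp add: B'_def algebra_simps)
  also have "\<dots> = ip (\<lambda>x y. A x y * B' x y) (p # r) (p # r) + ip A (scf u (p # r)) (scf u (p # r))"
    by (simp add: ip_add_kernel ip_scf)
  also have "ip (\<lambda>x y. A x y * B' x y) (p # r) (p # r) = ip (\<lambda>x y. A x y * B' x y) r r"
  proof -
    have z1: "(\<Sum>q\<leftarrow>p # r. fst p * fst q * (A (snd p) (snd q) * B' (snd p) (snd q))) = 0"
    proof (intro sum_list_zeroI)
      fix q assume "q \<in> set (p # r)"
      then have "snd q \<in> S" using Cons.prems(3) by (auto simp: pts_def)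
      then have "B' x0 (snd q) = 0" using col by blast
      then show "fst p * fst q * (A (snd p) (snd q) * B' (snd p) (snd q)) = 0" by (simp add: x0_def)
    qed
    have z2: "(\<Sum>q\<leftarrow>r. fst q * fst p * (A (snd q) (snd p) * B' (snd q) (snd p))) = 0"
    proof (intro sum_list_zeroI)
      fix q assume "q \<in> set r"
      then have "snd q \<in> S" using Cons.prems(3) by (auto simp: pts_def)
      then have "B' (snd q) x0 = 0" using col by blast
      then show "fst q * fst p * (A (snd q) (snd p) * B' (snd q) (snd p)) = 0" by (simp add: x0_def)
    qed
    show ?thesis
      unfolding ip_Cons_left[of _ p r "p # r"] ip_Cons_right[of _ r p r] z1 z2 by simp
  qed
  finally show ?case
    using Cons.IH[OF posB' symB' rS] A Cons.prems(3) by (simp add: posk_def add_nonneg_nonneg)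
qed


lemma posk_add: "posk S K \<Longrightarrow> posk S L \<Longrightarrow> posk S (\<lambda>x y. K x y + L x y)"
  by (simp add: posk_def ip_add_kernel)
lemma posk_cmult: "0 \<le> c \<Longrightarrow> posk S K \<Longrightarrow> posk S (\<lambda>x y. c * K x y)"
  by (simp add: posk_def ip_cmult_kernel)
lemma posk_zero: "posk S (\<lambda>x y. 0)"
  by (simp add: posk_def ip_def)
lemma posk_mult: "posk S A \<Longrightarrow> posk S B \<Longrightarrow> symk S B \<Longrightarrow> posk S (\<lambda>x y. A x y * B x y)"
  using schur unfolding posk_def by blast
lemma symk_add: "symk S K \<Longrightarrow> symk S L \<Longrightarrow> symk S (\<lambda>x y. K x y + L x y)"
  by (simp add: symk_def)
lemma symk_mult: "symk S K \<Longrightarrow> symk S L \<Longrightarrow> symk S (\<lambda>x y. K x y * L x y)"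
  by (simp add: symk_def)
lemma symk_cmult: "symk S K \<Longrightarrow> symk S (\<lambda>x y. c * K x y)"
  by (simp add: symk_def)
lemma symk_pow: "symk S K \<Longrightarrow> symk S (\<lambda>x y. K x y ^ n)"
  by (simp add: symk_def)
lemma posk_pow: "posk S K \<Longrightarrow> symk S K \<Longrightarrow> posk S (\<lambda>x y. K x y ^ n)"
proof (induction n)
  case 0 then show ?case using posk_one by simp
next
  case (Suc n)
  then show ?case using posk_mult[OF Suc.prems(1) Suc.IH[OF Suc.prems] symk_pow[OF Suc.prems(2)]]
    by simp
qed
lemma posk_sum: "(\<And>t. t \<in> A \<Longrightarrow> posk S (F t)) \<Longrightarrow> posk S (\<lambda>x y. \<Sum>t\<in>A. F t x y)"
  by (simp add: posk_def ip_sum_kernel sum_nonneg)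
lemma symk_sum: "(\<And>t. t \<in> A \<Longrightarrow> symk S (F t)) \<Longrightarrow> symk S (\<lambda>x y. \<Sum>t\<in>A. F t x y)"
  by (simp add: symk_def)

lemma domD: assumes "domk S K g C" shows "0 \<le> C" "symk S K" "posk S K"
  "pts r \<subseteq> S \<Longrightarrow> (lin g r)\<^sup>2 \<le> C * ip K r r"
  using assms by (auto simp: domk_def)

lemma dom_mono:
  assumes "domk S K g C" "symk S L" "posk S (\<lambda>x y. L x y - K x y)"
  shows "domk S L g C"
proof -
  have e: "ip L r r = ip K r r + ip (\<lambda>x y. L x y - K x y) r r" for r
    by (simp add: ip_diff_kernel)
  show ?thesis unfolding domk_def
  proof (intro conjI allI impI)
    show "posk S L" unfolding posk_def
      using assms e by (auto simp: posk_def domk_def add_nonneg_nonneg)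
    fix r assume r: "pts r \<subseteq> S"
    have "(lin g r)\<^sup>2 \<le> C * ip K r r" using assms r by (auto simp: domk_def)
    also have "\<dots> \<le> C * ip L r r"
      using assms r e by (intro mult_left_mono) (auto simp: posk_def domk_def)
    finally show "(lin g r)\<^sup>2 \<le> C * ip L r r" .
  qed (use assms in \<open>auto simp: domk_def\<close>)
qed

lemma dom_const_mono: "domk S K g C \<Longrightarrow> C \<le> D \<Longrightarrow> domk S K g D"
  unfolding domk_def posk_def
proof (elim conjE, intro conjI allI impI)
  fix r assume a: "\<forall>r. pts r \<subseteq> S \<longrightarrow> 0 \<le> ip K r r" "\<forall>r. pts r \<subseteq> S \<longrightarrow> (lin g r)\<^sup>2 \<le> C * ip K r r"
    "C \<le> D" "pts r \<subseteq> S"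
  then have "C * ip K r r \<le> D * ip K r r" by (simp add: mult_right_mono)
  then show "(lin g r)\<^sup>2 \<le> D * ip K r r" using a by (meson order_trans)
qed auto

lemma dom_kscale:
  assumes "domk S K g C" "0 < b"
  shows "domk S (\<lambda>x y. b * K x y) g (C / b)"
  using assms unfolding domk_def
  by (auto simp: posk_def symk_def ip_cmult_kernel)

lemma dom_smult:
  assumes "domk S K g C"
  shows "domk S K (\<lambda>x. c * g x) (c\<^sup>2 * C)"
  unfolding domk_def
proof (intro conjI allI impI)
  fix r assume "pts r \<subseteq> S"
  then have "(lin g r)\<^sup>2 \<le> C * ip K r r" using assms by (simp add: domk_def)
  then have "c\<^sup>2 * (lin g r)\<^sup>2 \<le> c\<^sup>2 * (C * ip K r r)" by (simp add: mult_left_mono)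
  then show "(lin (\<lambda>x. c * g x) r)\<^sup>2 \<le> c\<^sup>2 * C * ip K r r"
    by (simp add: lin_cmult power_mult_distrib mult.assoc)
qed (use assms in \<open>auto simp: domk_def\<close>)

lemma dom_zero: "posk S K \<Longrightarrow> symk S K \<Longrightarrow> domk S K (\<lambda>_. 0) 0"
  by (simp add: domk_def lin_def)

lemma dom_add1:
  assumes "domk S K g C" "domk S K h D"
  shows "domk S K (\<lambda>x. g x + h x) (2 * C + 2 * D)"
  unfolding domk_def
proof (intro conjI allI impI)
  fix r assume r: "pts r \<subseteq> S"
  have a: "(lin g r)\<^sup>2 \<le> C * ip K r r" "(lin h r)\<^sup>2 \<le> D * ip K r r"
    using assms r by (auto simp: domk_def)
  have "(lin g r + lin h r)\<^sup>2 \<le> 2 * (lin g r)\<^sup>2 + 2 * (lin h r)\<^sup>2"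
  proof -
    have "0 \<le> (lin g r - lin h r)\<^sup>2" by simp
    then show ?thesis by (simp add: power2_sum power2_diff)
  qed
  then show "(lin (\<lambda>x. g x + h x) r)\<^sup>2 \<le> (2 * C + 2 * D) * ip K r r"
    using a by (simp add: lin_add algebra_simps)
qed (use assms in \<open>auto simp: domk_def\<close>)

lemma amgm_aux: "(x::real) * y \<le> ((x + y) / 2)\<^sup>2"
proof -
  have "0 \<le> (x - y)\<^sup>2" by simp
  then show ?thesis by (simp add: power2_eq_square field_simps)
qed

lemma cs_aux:
  fixes L1 L2 C D Q1 Q2 :: real
  assumes "L1\<^sup>2 \<le> C * Q1" "L2\<^sup>2 \<le> D * Q2" "0 \<le> C" "0 \<le> D" "0 \<le> Q1" "0 \<le> Q2"
  shows "(L1 + L2)\<^sup>2 \<le> (C + D) * (Q1 + Q2)"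
proof -
  have "(\<bar>L1 * L2\<bar>)\<^sup>2 = L1\<^sup>2 * L2\<^sup>2" by (simp add: power_mult_distrib)
  also have "\<dots> \<le> (C * Q1) * (D * Q2)"
    by (rule mult_mono[OF assms(1) assms(2)]) (use assms in simp_all)
  also have "\<dots> = (C * Q2) * (D * Q1)" by simp
  also have "\<dots> \<le> ((C * Q2 + D * Q1) / 2)\<^sup>2"
    by (rule amgm_aux)
  finally have "\<bar>L1 * L2\<bar> \<le> (C * Q2 + D * Q1) / 2"
    by (rule power2_le_imp_le) (use assms in simp_all)
  then have m: "L1 * L2 \<le> (C * Q2 + D * Q1) / 2"
    by (rule order_trans[OF abs_ge_self])
  then have m2: "2 * (L1 * L2) \<le> C * Q2 + D * Q1" by simp
  have e1: "(L1 + L2)\<^sup>2 = L1\<^sup>2 + 2 * (L1 * L2) + L2\<^sup>2" by (simp add: power2_sum)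
  have e2: "(C + D) * (Q1 + Q2) = C * Q1 + (C * Q2 + D * Q1) + D * Q2" by (simp add: algebra_simps)
  show ?thesis unfolding e1 e2 using assms(1) m2 assms(2) by (rule add_mono[OF add_mono]) 
qed

lemma dom_add:
  assumes "domk S K g C" "domk S L h D"
  shows "domk S (\<lambda>x y. K x y + L x y) (\<lambda>x. g x + h x) (C + D)"
  unfolding domk_def
proof (intro conjI allI impI)
  fix r assume r: "pts r \<subseteq> S"
  show "(lin (\<lambda>x. g x + h x) r)\<^sup>2 \<le> (C + D) * ip (\<lambda>x y. K x y + L x y) r r"
    unfolding lin_add ip_add_kernel
    by (rule cs_aux) (use assms r in \<open>auto simp: domk_def posk_def\<close>)
qed (use assms in \<open>auto simp: domk_def intro: posk_add symk_add\<close>)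

lemma dom_mult:
  assumes g: "domk S K g C" and h: "domk S L h D"
  shows "domk S (\<lambda>x y. K x y * L x y) (\<lambda>x. g x * h x) (C * D)"
  unfolding domk_def
proof (intro conjI allI impI)
  show "0 \<le> C * D" using g h by (simp add: domk_def)
  show "symk S (\<lambda>x y. K x y * L x y)" using g h by (auto simp: domk_def intro: symk_mult)
  show "posk S (\<lambda>x y. K x y * L x y)" using g h by (auto simp: domk_def intro: posk_mult)
  fix r assume r: "pts r \<subseteq> S"
  define M1 where "M1 x y = C * K x y - g x * g y" for x y
  have pM1: "posk S M1" unfolding posk_def
  proof (intro allI impI)
    fix s assume "pts s \<subseteq> S"
    then show "0 \<le> ip M1 s s"
      using g unfolding M1_def domk_def by (simp add: ip_diff_kernel ip_cmult_kernel ip_prod power2_eq_square)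
  qed
  have DL: "posk S (\<lambda>x y. D * L x y)" "symk S (\<lambda>x y. D * L x y)"
    using h by (auto simp: domk_def intro: posk_cmult symk_cmult)
  have t1: "0 \<le> ip (\<lambda>x y. M1 x y * (D * L x y)) r r"
    using schur[OF pM1 DL r] .
  have "(lin h (scf g r))\<^sup>2 \<le> D * ip L (scf g r) (scf g r)"
    using h r by (simp add: domk_def)
  then have t2: "0 \<le> ip (\<lambda>x y. g x * (D * L x y - h x * h y) * g y) r r"
    by (simp add: ip_scf[symmetric] ip_diff_kernel ip_cmult_kernel ip_prod power2_eq_square)
  have "ip (\<lambda>x y. M1 x y * (D * L x y)) r r + ip (\<lambda>x y. g x * (D * L x y - h x * h y) * g y) r r
      = ip (\<lambda>x y. (C * D) * (K x y * L x y) - (g x * h x) * (g y * h y)) r r"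
    unfolding ip_add_kernel[symmetric] by (intro ip_cong) (simp add: M1_def algebra_simps)
  also have "\<dots> = C * D * ip (\<lambda>x y. K x y * L x y) r r - (lin (\<lambda>x. g x * h x) r)\<^sup>2"
    by (simp add: ip_diff_kernel ip_cmult_kernel ip_prod power2_eq_square)
  finally show "(lin (\<lambda>x. g x * h x) r)\<^sup>2 \<le> C * D * ip (\<lambda>x y. K x y * L x y) r r"
    using t1 t2 by linarith
qed

lemma dom_one: "domk S (\<lambda>_ _. 1) (\<lambda>_. 1) 1"
proof -
  have "ip (\<lambda>_ _. 1) r r = lin (\<lambda>_. 1) r * lin (\<lambda>_. 1) r" for r :: "(real \<times> 'a) list"
    using ip_prod[of "\<lambda>_. 1" "\<lambda>_. 1" r r] by simp
  then show ?thesis using posk_one by (simp add: domk_def symk_def power2_eq_square)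
qed

lemma dom_pow: "domk S K g C \<Longrightarrow> domk S (\<lambda>x y. K x y ^ n) (\<lambda>x. g x ^ n) (C ^ n)"
proof (induction n)
  case 0 then show ?case using dom_one by simp
next
  case (Suc n) then show ?case using dom_mult[OF Suc.prems Suc.IH[OF Suc.prems]] by simp
qed

lemma dom_sum:
  assumes "finite A" "\<And>t. t \<in> A \<Longrightarrow> domk S (F t) (G t) (C t)"
  shows "domk S (\<lambda>x y. \<Sum>t\<in>A. F t x y) (\<lambda>x. \<Sum>t\<in>A. G t x) (\<Sum>t\<in>A. C t)"
  using assms
proof (induction A rule: finite_induct)
  case empty then show ?case using dom_zero[OF posk_zero] by (simp add: symk_def)
next
  case (insert t A) then show ?case using dom_add[of S "F t" "G t" "C t"] by simp
qed

definition indom :: "'a set \<Rightarrow> ('a \<Rightarrow> 'a \<Rightarrow> real) \<Rightarrow> ('a \<Rightarrow> real) \<Rightarrow> bool" where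
  "indom S K g \<longleftrightarrow> (\<exists>C. domk S K g C)"

lemma indom_add: "indom S K g \<Longrightarrow> indom S K h \<Longrightarrow> indom S K (\<lambda>x. g x + h x)"
  unfolding indom_def using dom_add1 by blast
lemma indom_smult: "indom S K g \<Longrightarrow> indom S K (\<lambda>x. c * g x)"
  unfolding indom_def using dom_smult by blast
lemma indom_sum:
  assumes "posk S K" "symk S K" "\<And>t. t \<in> A \<Longrightarrow> indom S K (G t)"
  shows "indom S K (\<lambda>x. \<Sum>t\<in>A. G t x)"
proof (cases "finite A")
  case False then show ?thesis using dom_zero[OF assms(1,2)] by (auto simp: indom_def)
next
  case True
  then show ?thesis using assms(3)
  proof (induction A rule: finite_induct)
    case empty then show ?case using dom_zero[OF assms(1,2)] by (auto simp: indom_def)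
  next
    case (insert t A) then show ?case using indom_add[of S K "G t" "\<lambda>x. \<Sum>t\<in>A. G t x"] by simp
  qed
qed
lemma indom_mono: "indom S K g \<Longrightarrow> symk S L \<Longrightarrow> posk S (\<lambda>x y. L x y - K x y) \<Longrightarrow> indom S L g"
  unfolding indom_def using dom_mono by blast


definition ac :: "(real \<Rightarrow> real) \<Rightarrow> nat \<Rightarrow> real" where
  "ac \<sigma> t = (deriv ^^ t) \<sigma> 0 / fact t"

lemma abs_series_eq: "abs_series \<sigma> x = (\<Sum>t. \<bar>ac \<sigma> t\<bar> * x ^ t)"
  by (simp add: abs_series_def ac_def)

lemma taylor_sums: "taylor_decomp \<sigma> \<Longrightarrow> (\<lambda>t. ac \<sigma> t * x ^ t) sums \<sigma> x"
  by (simp add: taylor_decomp_def ac_def)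

lemma taylor_abs_summable:
  assumes "taylor_decomp \<sigma>"
  shows "summable (\<lambda>t. \<bar>ac \<sigma> t\<bar> * x ^ t)"
proof -
  have "summable (\<lambda>t. ac \<sigma> t * (\<bar>x\<bar> + 1) ^ t)"
    using taylor_sums[OF assms] sums_summable by blast
  then have s: "summable (\<lambda>t. norm (ac \<sigma> t * x ^ t))"
    by (rule powser_insidea) simp
  show ?thesis
    by (rule summable_comparison_test'[OF s]) (simp add: abs_mult power_abs)
qed

lemma abs_series_sums: "taylor_decomp \<sigma> \<Longrightarrow> (\<lambda>t. \<bar>ac \<sigma> t\<bar> * x ^ t) sums abs_series \<sigma> x"
  using taylor_abs_summable abs_series_eq summable_sums by metis

lemma abs_series_nonneg: "taylor_decomp \<sigma> \<Longrightarrow> 0 \<le> x \<Longrightarrow> 0 \<le> abs_series \<sigma> x"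
  unfolding abs_series_eq by (rule suminf_nonneg[OF taylor_abs_summable]) auto

lemma sums_sum_list:
  fixes f :: "nat \<Rightarrow> 'a \<Rightarrow> real"
  shows "(\<And>p. p \<in> set xs \<Longrightarrow> (\<lambda>t. f t p) sums g p) \<Longrightarrow> (\<lambda>t. \<Sum>p\<leftarrow>xs. f t p) sums (\<Sum>p\<leftarrow>xs. g p)"
proof (induction xs)
  case Nil then show ?case by simp
next
  case (Cons a xs)
  have "(\<lambda>t. f t a) sums g a" using Cons.prems by simp
  moreover have "(\<lambda>t. \<Sum>p\<leftarrow>xs. f t p) sums (\<Sum>p\<leftarrow>xs. g p)"
    using Cons.IH Cons.prems by simp
  ultimately have "(\<lambda>t. f t a + (\<Sum>p\<leftarrow>xs. f t p)) sums (g a + (\<Sum>p\<leftarrow>xs. g p))"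
    by (rule sums_add)
  then show ?case by simp
qed

lemma ip_sums:
  assumes "\<And>x y. x \<in> pts r \<Longrightarrow> y \<in> pts s \<Longrightarrow> (\<lambda>t. F t x y) sums G x y"
  shows "(\<lambda>t. ip (F t) r s) sums ip G r s"
  unfolding ip_def
  by (intro sums_sum_list sums_mult) (use assms in \<open>auto simp: pts_def\<close>)

lemma lin_sums:
  assumes "\<And>x. x \<in> pts r \<Longrightarrow> (\<lambda>t. F t x) sums G x"
  shows "(\<lambda>t. lin (F t) r) sums lin G r"
  unfolding lin_def
  by (intro sums_sum_list sums_mult) (use assms in \<open>auto simp: pts_def\<close>)

lemma sums_nonneg: "f sums s \<Longrightarrow> (\<And>n. 0 \<le> f n) \<Longrightarrow> 0 \<le> (s::real)"
  using sums_le[of "\<lambda>_. 0" f 0 s] by auto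

lemma dom_term:
  assumes g: "domk S K g C" and b: "\<bar>a\<bar> = b"
  shows "domk S (\<lambda>x y. b * K x y ^ t) (\<lambda>x. a * g x ^ t) (b * C ^ t)"
proof (cases "b = 0")
  case True
  then have a0: "a = 0" using b by simp
  have "posk S (\<lambda>x y. K x y ^ t)" "symk S (\<lambda>x y. K x y ^ t)"
    using g by (auto simp: domk_def intro: posk_pow symk_pow)
  then show ?thesis using True a0
    by (simp add: domk_def posk_def symk_def ip_def lin_def)
next
  case False
  then have bp: "0 < b" using b by auto
  have "domk S (\<lambda>x y. K x y ^ t) (\<lambda>x. a * g x ^ t) (a\<^sup>2 * C ^ t)"
    by (rule dom_smult[OF dom_pow[OF g]])
  from dom_kscale[OF this bp] have "domk S (\<lambda>x y. b * K x y ^ t) (\<lambda>x. a * g x ^ t) (a\<^sup>2 * C ^ t / b)" .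
  then show ?thesis
  proof -
    have e: "a\<^sup>2 = b * b" using b by (metis abs_mult_self_eq power2_eq_square)
    have "a\<^sup>2 * C ^ t / b = b * C ^ t" unfolding e using bp by simp
    then show ?thesis using \<open>domk S (\<lambda>x y. b * K x y ^ t) (\<lambda>x. a * g x ^ t) (a\<^sup>2 * C ^ t / b)\<close> by simp
  qed
qed

lemma dom_series:
  assumes ts: "taylor_decomp \<sigma>" and g: "domk S K g C"
  shows "domk S (\<lambda>x y. abs_series \<sigma> (K x y)) (\<lambda>x. \<sigma> (g x)) (abs_series \<sigma> C)"
proof -
  define a where "a = ac \<sigma>"
  define b where "b t = \<bar>a t\<bar>" for t
  have C0: "0 \<le> C" and symK: "symk S K" and posK: "posk S K" using g by (auto simp: domk_def)
  have Kt: "posk S (\<lambda>x y. K x y ^ t)" "symk S (\<lambda>x y. K x y ^ t)" for t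
    using posK symK by (auto intro: posk_pow symk_pow)
  have ipsums: "(\<lambda>t. b t * ip (\<lambda>x y. K x y ^ t) r r) sums ip (\<lambda>x y. abs_series \<sigma> (K x y)) r r" for r
    unfolding ip_cmult_kernel[symmetric]
    by (rule ip_sums) (use abs_series_sums[OF ts] in \<open>simp add: b_def a_def\<close>)
  have posf: "posk S (\<lambda>x y. abs_series \<sigma> (K x y))"
    unfolding posk_def
  proof (intro allI impI)
    fix r assume "pts r \<subseteq> S"
    then show "0 \<le> ip (\<lambda>x y. abs_series \<sigma> (K x y)) r r"
      using Kt(1) by (intro sums_nonneg[OF ipsums]) (auto simp: posk_def b_def)
  qed
  have symf: "symk S (\<lambda>x y. abs_series \<sigma> (K x y))"
    using symK by (simp add: symk_def)
  have Csums: "(\<lambda>t. b t * C ^ t) sums abs_series \<sigma> C"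
    using abs_series_sums[OF ts] by (simp add: b_def a_def)
  show ?thesis unfolding domk_def
  proof (intro conjI allI impI posf symf)
    show "0 \<le> abs_series \<sigma> C" using abs_series_nonneg[OF ts C0] .
    fix r assume r: "pts r \<subseteq> S"
    have Lsums: "(\<lambda>t. lin (\<lambda>x. a t * g x ^ t) r) sums lin (\<lambda>x. \<sigma> (g x)) r"
      by (rule lin_sums) (use taylor_sums[OF ts] in \<open>simp add: a_def\<close>)
    have part: "(\<Sum>t<T. lin (\<lambda>x. a t * g x ^ t) r)\<^sup>2 \<le> abs_series \<sigma> C * ip (\<lambda>x y. abs_series \<sigma> (K x y)) r r" for T
    proof -
      have "domk S (\<lambda>x y. \<Sum>t<T. b t * K x y ^ t) (\<lambda>x. \<Sum>t<T. a t * g x ^ t) (\<Sum>t<T. b t * C ^ t)"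
        by (rule dom_sum) (auto intro: dom_term[OF g] simp: b_def)
      then have "(lin (\<lambda>x. \<Sum>t<T. a t * g x ^ t) r)\<^sup>2 \<le> (\<Sum>t<T. b t * C ^ t) * ip (\<lambda>x y. \<Sum>t<T. b t * K x y ^ t) r r"
        using r by (simp add: domk_def)
      also have "\<dots> = (\<Sum>t<T. b t * C ^ t) * (\<Sum>t<T. b t * ip (\<lambda>x y. K x y ^ t) r r)"
        by (simp add: ip_sum_kernel ip_cmult_kernel)
      also have "\<dots> \<le> abs_series \<sigma> C * ip (\<lambda>x y. abs_series \<sigma> (K x y)) r r"
      proof (rule mult_mono)
        show "(\<Sum>t<T. b t * C ^ t) \<le> abs_series \<sigma> C"
          unfolding sums_unique[OF Csums]
          by (rule sum_le_suminf[OF sums_summable[OF Csums] finite_lessThan]) (use C0 in \<open>simp add: b_def\<close>)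
        have "0 \<le> b t * ip (\<lambda>x y. K x y ^ t) r r" for t
          using Kt(1) r by (auto simp: posk_def b_def)
        then show "(\<Sum>t<T. b t * ip (\<lambda>x y. K x y ^ t) r r) \<le> ip (\<lambda>x y. abs_series \<sigma> (K x y)) r r"
          unfolding sums_unique[OF ipsums[of r]]
          by (rule sum_le_suminf[OF sums_summable[OF ipsums[of r]] finite_lessThan])
        show "0 \<le> abs_series \<sigma> C" using abs_series_nonneg[OF ts C0] .
        show "0 \<le> (\<Sum>t<T. b t * ip (\<lambda>x y. K x y ^ t) r r)"
          using Kt(1) r by (auto simp: posk_def b_def intro!: sum_nonneg)
      qed
      finally show ?thesis by (simp add: lin_sum)
    qed
    have "(\<lambda>T. (\<Sum>t<T. lin (\<lambda>x. a t * g x ^ t) r)\<^sup>2) \<longlonglongrightarrow> (lin (\<lambda>x. \<sigma> (g x)) r)\<^sup>2"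
      using Lsums unfolding sums_def by (intro tendsto_power)
    then show "(lin (\<lambda>x. \<sigma> (g x)) r)\<^sup>2 \<le> abs_series \<sigma> C * ip (\<lambda>x y. abs_series \<sigma> (K x y)) r r"
      by (rule LIMSEQ_le_const2) (use part in auto)
  qed
qed


lemma h0_sqnorm_ip: "h0_sqnorm K r = ip K r r"
  by (simp add: h0_sqnorm_def ip_def split_def)
lemma h0_fun_ip: "h0_fun K r y = ip K r [(1, y)]"
  by (simp add: h0_fun_def ip_def split_def)
lemma h0_diff_eq: "h0_diff r r' = r @ scl (-1) r'"
  by (simp add: h0_diff_def scl_def split_def)

lemma quad_aux:
  fixes e k d :: real
  assumes k: "0 \<le> k" and h: "\<And>t. - d < t * e + t * t * k / 2"
  shows "(e / (k + 1))\<^sup>2 < d"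
proof -
  define s where "s = e / (k + 1)"
  have kp: "0 < k + 1" using k by simp
  have e: "e = s * (k + 1)" using kp by (simp add: s_def)
  have "(-s) * e + (-s) * (-s) * k / 2 = - (s * s) * (k + 2) / 2"
    by (simp add: e algebra_simps)
  with h[of "-s"] have a: "- d < - (s * s) * (k + 2) / 2" by simp
  have "s * s \<le> (s * s) * (k + 2) / 2" using k by (simp add: field_simps)
  then show ?thesis using a by (simp add: s_def[symmetric] power2_eq_square)
qed

lemma lin_aux: "(u::real) \<le> z \<Longrightarrow> x < u + a \<Longrightarrow> y < u + b \<Longrightarrow> q = 4 * (x + y - 2 * z) \<Longrightarrow> q < 4 * (a + b)"
  by argo

lemma dom_rkhs:
  assumes g: "domk S K g C"
  shows "g \<in> rkhs S K"
proof -
  have C0: "0 \<le> C" and symK: "symk S K" and posK: "posk S K" using g by (auto simp: domk_def)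
  define J where "J r = ip K r r / 2 - lin g r" for r
  define P where "P = {r. pts r \<subseteq> S}"
  have low: "- C / 2 \<le> J r" if "r \<in> P" for r
  proof -
    have L: "(lin g r)\<^sup>2 \<le> C * ip K r r" and Q: "0 \<le> ip K r r"
      using g that by (auto simp: domk_def posk_def P_def)
    have "lin g r \<le> (C + ip K r r) / 2"
    proof (rule ccontr)
      assume "\<not> ?thesis"
      then have "(C + ip K r r) / 2 < lin g r" by simp
      moreover have "0 \<le> (C + ip K r r) / 2" using C0 Q by simp
      ultimately have "((C + ip K r r) / 2)\<^sup>2 < (lin g r)\<^sup>2"
        by (rule power_strict_mono) auto
      moreover have "C * ip K r r \<le> ((C + ip K r r) / 2)\<^sup>2" by (rule amgm_aux)
      ultimately show False using L by simp
    qed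
    then show ?thesis by (simp add: J_def)
  qed
  define \<mu> where "\<mu> = Inf (J ` P)"
  have P0: "[] \<in> P" by (simp add: P_def)
  have bdd: "bdd_below (J ` P)" using low by (intro bdd_belowI2) auto
  have mule: "\<mu> \<le> J r" if "r \<in> P" for r
    unfolding \<mu>_def by (rule cInf_lower) (use that bdd in auto)
  have "\<exists>r\<in>P. J r < \<mu> + inverse (real (Suc m))" for m
  proof -
    have "Inf (J ` P) < \<mu> + inverse (real (Suc m))" by (simp add: \<mu>_def)
    from cInf_lessD[OF _ this] P0 show ?thesis by auto
  qed
  then obtain R where R: "\<And>m. R m \<in> P" "\<And>m. J (R m) < \<mu> + inverse (real (Suc m))"
    by metis
  have RS: "pts (R m) \<subseteq> S" for m using R(1) by (simp add: P_def)
  have par: "ip K (h0_diff u w) (h0_diff u w) = 4 * (J u + J w - 2 * J (scl (1/2) (u @ w)))"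
    if "u \<in> P" "w \<in> P" for u w
  proof -
    have s: "ip K w u = ip K u w" using ip_sym[OF symK] that by (auto simp: P_def)
    show ?thesis
      unfolding h0_diff_eq J_def
      by (simp add: ip_append_left ip_append_right ip_scl_left ip_scl_right lin_scl lin_append s
          algebra_simps)
  qed
  have cau: "ip K (h0_diff (R m) (R m')) (h0_diff (R m) (R m')) < 4 * (inverse (real (Suc m)) + inverse (real (Suc m')))"
    for m m'
  proof -
    have "scl (1/2) (R m @ R m') \<in> P" using R(1) by (simp add: P_def)
    then have "\<mu> \<le> J (scl (1/2) (R m @ R m'))" by (rule mule)
    from lin_aux[OF this R(2)[of m] R(2)[of m'] par[OF R(1) R(1), of m m']] show ?thesis .
  qed
  have cauchy: "\<forall>\<epsilon>>0. \<exists>M. \<forall>m\<ge>M. \<forall>m'\<ge>M. h0_sqnorm K (h0_diff (R m) (R m')) < \<epsilon>"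
  proof (intro allI impI)
    fix \<epsilon> :: real assume "0 < \<epsilon>"
    obtain M :: nat where M: "8 / \<epsilon> < real M" using reals_Archimedean2 by blast
    have Mp: "0 < real M" using M \<open>0 < \<epsilon>\<close> by (smt (verit) divide_pos_pos)
    have inv: "inverse (real (Suc m)) \<le> \<epsilon> / 8" if "M \<le> m" for m
    proof -
      have "8 / \<epsilon> < real (Suc m)" using M that by simp
      then have "8 < \<epsilon> * real (Suc m)" using \<open>0 < \<epsilon>\<close> by (simp add: field_simps)
      then show ?thesis using \<open>0 < \<epsilon>\<close> by (simp add: field_simps)
    qed
    show "\<exists>M. \<forall>m\<ge>M. \<forall>m'\<ge>M. h0_sqnorm K (h0_diff (R m) (R m')) < \<epsilon>"
    proof (intro exI allI impI)
      fix m m' assume mm: "M \<le> m" "M \<le> m'"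
      show "h0_sqnorm K (h0_diff (R m) (R m')) < \<epsilon>"
        using cau[of m m'] inv[OF mm(1)] inv[OF mm(2)] unfolding h0_sqnorm_ip by argo
    qed
  qed
  have conv: "(\<lambda>m. h0_fun K (R m) x) \<longlonglongrightarrow> g x" if x: "x \<in> S" for x
  proof -
    define k where "k = K x x"
    have k0: "0 \<le> k" using posk_diag[OF posK x] by (simp add: k_def)
    define e where "e m = ip K (R m) [(1, x)] - g x" for m
    have eb: "\<bar>e m\<bar> \<le> (k + 1) * sqrt (inverse (real (Suc m)))" for m
    proof -
      have h: "- inverse (real (Suc m)) < t * e m + t * t * k / 2" for t
      proof -
        have mem: "R m @ [(t, x)] \<in> P" using R(1) x by (simp add: P_def)
        have s: "ip K [(t, x)] (R m) = ip K (R m) [(t, x)]"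
          using ip_sym[OF symK] RS x by auto
        have s2: "ip K (R m) [(t, x)] = t * ip K (R m) [(1, x)]"
          by (simp add: ip_single_right)
        have i1: "ip K (R m @ [(t, x)]) (R m @ [(t, x)]) =
            ip K (R m) (R m) + 2 * (t * ip K (R m) [(1, x)]) + t * t * k"
          unfolding ip_append_left ip_append_right s s2 by (simp add: ip_def k_def)
        have l1: "lin g (R m @ [(t, x)]) = lin g (R m) + t * g x"
          by (simp add: lin_append lin_def)
        have "J (R m @ [(t, x)]) = J (R m) + t * e m + t * t * k / 2"
          unfolding J_def i1 l1 e_def by (simp add: algebra_simps)
        then show ?thesis using mule[OF mem] R(2)[of m] by argo
      qed
      have "(e m / (k + 1))\<^sup>2 < inverse (real (Suc m))" by (rule quad_aux[OF k0 h])
      then have "sqrt ((e m / (k + 1))\<^sup>2) < sqrt (inverse (real (Suc m)))"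
        by (rule real_sqrt_less_mono)
      moreover have "sqrt ((e m / (k + 1))\<^sup>2) = \<bar>e m\<bar> / (k + 1)"
      proof -
        have kabs: "\<bar>k + 1\<bar> = k + 1" using k0 by simp
        show ?thesis by (simp only: real_sqrt_abs abs_divide kabs)
      qed
      ultimately have "\<bar>e m\<bar> / (k + 1) < sqrt (inverse (real (Suc m)))" by (simp only:)
      then have "\<bar>e m\<bar> < sqrt (inverse (real (Suc m))) * (k + 1)"
        using pos_divide_less_eq[of "k + 1"] k0 by simp
      then show ?thesis by (simp add: mult.commute)
    qed
    have "(\<lambda>m. (k + 1) * sqrt (inverse (real (Suc m)))) \<longlonglongrightarrow> (k + 1) * sqrt 0"
      by (intro tendsto_mult tendsto_const tendsto_real_sqrt LIMSEQ_inverse_real_of_nat)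
    then have g0: "(\<lambda>m. (k + 1) * sqrt (inverse (real (Suc m)))) \<longlonglongrightarrow> 0" by simp
    have ev: "eventually (\<lambda>m. norm (e m) \<le> (k + 1) * sqrt (inverse (real (Suc m)))) sequentially"
      by (intro always_eventually allI, unfold real_norm_def, rule eb)
    have "e \<longlonglongrightarrow> 0" by (rule Lim_null_comparison[OF ev g0])
    then have "(\<lambda>m. e m + g x) \<longlonglongrightarrow> 0 + g x" by (intro tendsto_intros)
    then show ?thesis by (simp add: e_def h0_fun_ip)
  qed
  show ?thesis unfolding rkhs_def
    using RS cauchy conv by (intro CollectI exI[of _ R] conjI allI ballI) (auto simp: pts_def)
qed

lemma psd_from_posk:
  assumes "posk S K" "symk S K"
  shows "psd_kernel S K"
  unfolding psd_kernel_def
proof (intro conjI allI impI)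
  show "\<forall>x\<in>S. \<forall>y\<in>S. K x y = K y x" using assms(2) by (simp add: symk_def)
  fix m :: nat and a :: "nat \<Rightarrow> real" and x :: "nat \<Rightarrow> _"
  assume xs: "\<forall>i<m. x i \<in> S"
  define r where "r = map (\<lambda>i. (a i, x i)) [0..<m]"
  have "pts r \<subseteq> S" using xs by (auto simp: r_def pts_def)
  then have "0 \<le> ip K r r" using assms(1) by (simp add: posk_def)
  also have "ip K r r = (\<Sum>i<m. \<Sum>j<m. a i * a j * K (x i) (x j))"
    by (simp add: ip_def r_def o_def sum_set_upt_conv_sum_list_nat[symmetric] atLeast0LessThan)
  finally show "0 \<le> (\<Sum>i<m. \<Sum>j<m. a i * a j * K (x i) (x j))" .
qed


definition Lk :: "nat \<Rightarrow> nat \<Rightarrow> image \<Rightarrow> image \<Rightarrow> real" where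
  "Lk d q X Y = (\<Sum>j<d. X q j * Y q j)"

definition K1 :: "nat \<Rightarrow> nat \<Rightarrow> (nat \<Rightarrow> real \<Rightarrow> real) \<Rightarrow> image \<Rightarrow> image \<Rightarrow> real" where
  "K1 d n \<sigma> X Y = (\<Sum>i<n. abs_series (\<sigma> 1) (Lk d i X Y))"

primrec KK :: "nat \<Rightarrow> nat \<Rightarrow> (nat \<Rightarrow> real \<Rightarrow> real) \<Rightarrow> nat \<Rightarrow> image \<Rightarrow> image \<Rightarrow> real" where
  "KK d n \<sigma> 0 = K1 d n \<sigma>"
| "KK d n \<sigma> (Suc k) = (if k = 0 then K1 d n \<sigma> else (\<lambda>X Y. abs_series (\<sigma> (Suc k)) (KK d n \<sigma> k X Y)))"

lemma cnn_kernel_KK: "1 \<le> N \<Longrightarrow> cnn_kernel d n N \<sigma> = KK d n \<sigma> N"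
proof (induction N)
  case 0 then show ?case by simp
next
  case (Suc M)
  show ?case
  proof (cases "M = 0")
    case True then show ?thesis
      by (simp add: fun_eq_iff cnn_kernel_def K1_def Lk_def)
  next
    case False
    then have ih: "cnn_kernel d n M \<sigma> = KK d n \<sigma> M" using Suc.IH by simp
    have u: "[2..<Suc (Suc M)] = [2..<Suc M] @ [Suc M]" using False by simp
    show ?thesis
    proof (intro ext)
      fix X Y
      have "cnn_kernel d n (Suc M) \<sigma> X Y = abs_series (\<sigma> (Suc M)) (cnn_kernel d n M \<sigma> X Y)"
        unfolding cnn_kernel_def u by simp
      then show "cnn_kernel d n (Suc M) \<sigma> X Y = KK d n \<sigma> (Suc M) X Y"
        using False ih by simp
    qed
  qed
qed

lemma dom_prodk: "domk S (\<lambda>x y. g x * g y) g 1"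
proof -
  have e: "ip (\<lambda>x y. g x * g y) r r = (lin g r)\<^sup>2" for r
    by (simp add: ip_prod power2_eq_square)
  show ?thesis by (simp add: domk_def e posk_def symk_def mult.commute)
qed

lemma dom_Lk: "domk S (Lk d q) (\<lambda>X. \<Sum>m<d. X q m * w m) (\<Sum>m<d. (w m)\<^sup>2)"
proof -
  have "domk S (\<lambda>X Y. \<Sum>m<d. X q m * Y q m) (\<lambda>X. \<Sum>m<d. w m * X q m) (\<Sum>m<d. (w m)\<^sup>2 * 1)"
  proof (rule dom_sum)
    fix m assume "m \<in> {..<d}"
    show "domk S (\<lambda>x y. x q m * y q m) (\<lambda>x. w m * x q m) ((w m)\<^sup>2 * 1)"
      by (rule dom_smult[OF dom_prodk])
  qed simp
  moreover have "Lk d q = (\<lambda>X Y. \<Sum>m<d. X q m * Y q m)" by (simp add: fun_eq_iff Lk_def)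
  moreover have "(\<lambda>X. \<Sum>m<d. X q m * w m) = (\<lambda>X. \<Sum>m<d. w m * X q m)" by (simp add: mult.commute)
  ultimately show ?thesis by simp
qed

lemma posk_f_Lk: "taylor_decomp \<tau> \<Longrightarrow> posk S (\<lambda>X Y. abs_series \<tau> (Lk d q X Y)) \<and> symk S (\<lambda>X Y. abs_series \<tau> (Lk d q X Y))"
  using dom_series[OF _ dom_Lk[of S d q "\<lambda>_. 0"]] by (auto simp: domk_def)

lemma K1_pos: "taylor_decomp (\<sigma> 1) \<Longrightarrow> posk S (K1 d n \<sigma>) \<and> symk S (K1 d n \<sigma>)"
  unfolding K1_def using posk_f_Lk by (auto intro!: posk_sum symk_sum)

lemma K1_ge:
  assumes "taylor_decomp (\<sigma> 1)" "q < n"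
  shows "posk S (\<lambda>X Y. K1 d n \<sigma> X Y - abs_series (\<sigma> 1) (Lk d q X Y))"
proof -
  have "(\<lambda>X Y. K1 d n \<sigma> X Y - abs_series (\<sigma> 1) (Lk d q X Y)) =
        (\<lambda>X Y. \<Sum>i\<in>{..<n} - {q}. abs_series (\<sigma> 1) (Lk d i X Y))"
    using assms(2) by (simp add: fun_eq_iff K1_def sum_diff1)
  then show ?thesis using posk_f_Lk[OF assms(1)] by (auto intro!: posk_sum)
qed

lemma indom_posk: "indom S K g \<Longrightarrow> posk S K \<and> symk S K"
  by (auto simp: indom_def domk_def)

lemma state_Suc:
  "cnn_state \<sigma> \<gamma> W dd p nn (Suc k) X q l =
   (\<Sum>q'<nn (Suc k). \<gamma> (Suc k) (q + l div p (Suc (Suc k))) q' *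
      \<sigma> (Suc k) (\<Sum>m<dd (Suc k) * p (Suc k). cnn_state \<sigma> \<gamma> W dd p nn k X q' m * W (Suc k) (l mod p (Suc (Suc k))) m))"
  by (simp add: cnn_layer_def Let_def)

lemma indom_layer:
  assumes ts: "taylor_decomp \<tau>" and inp: "\<And>q' m. indom S K (\<lambda>X. Y X q' m)"
  shows "indom S (\<lambda>X Z. abs_series \<tau> (K X Z)) (\<lambda>X. \<Sum>q'<nk. c q' * \<tau> (\<Sum>m<M. Y X q' m * w m))"
proof -
  have pK: "posk S K" "symk S K" using indom_posk[OF inp] by auto
  have inner: "indom S K (\<lambda>X. \<Sum>m<M. Y X q' m * w m)" for q'
    using indom_sum[OF pK, of "{..<M}" "\<lambda>m X. Y X q' m * w m"] indom_smult[OF inp]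
    by (simp add: mult.commute)
  have outer: "indom S (\<lambda>X Z. abs_series \<tau> (K X Z)) (\<lambda>X. \<tau> (\<Sum>m<M. Y X q' m * w m))" for q'
  proof -
    from inner[of q'] obtain C where "domk S K (\<lambda>X. \<Sum>m<M. Y X q' m * w m) C" by (auto simp: indom_def)
    from dom_series[OF ts this] show ?thesis by (auto simp: indom_def)
  qed
  have pf: "posk S (\<lambda>X Z. abs_series \<tau> (K X Z))" "symk S (\<lambda>X Z. abs_series \<tau> (K X Z))"
    using indom_posk[OF outer[of undefined]] by auto
  show ?thesis
    using indom_sum[OF pf, of "{..<nk}" "\<lambda>q' X. c q' * \<tau> (\<Sum>m<M. Y X q' m * w m)"] indom_smult[OF outer]
    by simp
qed

lemma layer1:
  assumes ts: "taylor_decomp (\<sigma> 1)" and sz: "dd 1 = d" "p 1 = 1" "nn 1 = n"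
  shows "indom S (K1 d n \<sigma>) (\<lambda>X. cnn_state \<sigma> \<gamma> W dd p nn 1 X q l)"
proof -
  have pK: "posk S (K1 d n \<sigma>)" "symk S (K1 d n \<sigma>)" using K1_pos[of \<sigma>, OF ts] by auto
  have one: "indom S (K1 d n \<sigma>) (\<lambda>X. \<sigma> 1 (\<Sum>m<d. X q' m * w m))" if "q' < n" for q' w
  proof -
    obtain C where "domk S (\<lambda>X Y. abs_series (\<sigma> 1) (Lk d q' X Y)) (\<lambda>X. \<sigma> 1 (\<Sum>m<d. X q' m * w m)) C"
      using dom_series[OF ts dom_Lk] by blast
    from dom_mono[OF this pK(2) K1_ge[of \<sigma>, OF ts that]] show ?thesis by (auto simp: indom_def)
  qed
  have "indom S (K1 d n \<sigma>) (\<lambda>X. \<Sum>q'<n. c q' * \<sigma> 1 (\<Sum>m<d. X q' m * w m))" for c w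
    using indom_sum[OF pK, of "{..<n}" "\<lambda>q' X. c q' * \<sigma> 1 (\<Sum>m<d. X q' m * w m)"]
      indom_smult[OF one] by simp
  then show ?thesis
    using state_Suc[of \<sigma> \<gamma> W dd p nn 0 X q l for X] sz by simp
qed

lemma net_indom:
  assumes ts: "\<forall>i\<in>{1..N}. taylor_decomp (\<sigma> i)" and sz: "dd 1 = d" "p 1 = 1" "nn 1 = n"
  shows "1 \<le> k \<Longrightarrow> k \<le> N \<Longrightarrow> indom S (KK d n \<sigma> k) (\<lambda>X. cnn_state \<sigma> \<gamma> W dd p nn k X q l)"
proof (induction k arbitrary: q l)
  case 0 then show ?case by simp
next
  case (Suc k)
  show ?case
  proof (cases "k = 0")
    case True
    have ts1: "taylor_decomp (\<sigma> 1)" using ts Suc.prems by simp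
    show ?thesis using layer1[where \<sigma>=\<sigma> and dd=dd and p=p and nn=nn and d=d and n=n, OF ts1 sz] True by simp
  next
    case False
    have ih: "indom S (KK d n \<sigma> k) (\<lambda>X. cnn_state \<sigma> \<gamma> W dd p nn k X q' m)" for q' m
      using Suc.IH False Suc.prems by simp
    have tsk: "taylor_decomp (\<sigma> (Suc k))" using ts Suc.prems by simp
    have "indom S (\<lambda>X Z. abs_series (\<sigma> (Suc k)) (KK d n \<sigma> k X Z))
      (\<lambda>X. \<Sum>q'<nn (Suc k). \<gamma> (Suc k) (q + l div p (Suc (Suc k))) q' *
         \<sigma> (Suc k) (\<Sum>m<dd (Suc k) * p (Suc k). cnn_state \<sigma> \<gamma> W dd p nn k X q' m * W (Suc k) (l mod p (Suc (Suc k))) m))"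
      by (rule indom_layer[OF tsk]) (rule ih)
    then show ?thesis
      unfolding state_Suc using False by simp
  qed
qed

lemma KK_pos:
  assumes ts: "\<forall>i\<in>{1..N}. taylor_decomp (\<sigma> i)" and "1 \<le> N"
  shows "posk S (KK d n \<sigma> N) \<and> symk S (KK d n \<sigma> N)"
proof -
  have "indom S (KK d n \<sigma> N) (\<lambda>X. cnn_state \<sigma> \<gamma> W (\<lambda>_. d) (\<lambda>_. 1) (\<lambda>_. n) N X 0 0)"
    by (rule net_indom[OF ts]) (use assms in auto)
  then show ?thesis by (rule indom_posk)
qed

lemma net_rkhs:
  assumes ts: "\<forall>i\<in>{1..N}. taylor_decomp (\<sigma> i)" and N: "1 \<le> N"
    and sz: "dd 1 = d" "p 1 = 1" "nn 1 = n"
  shows "cnn_net N \<sigma> \<gamma> W Wout dd p nn \<in> rkhs S (KK d n \<sigma> N)"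
proof -
  have pK: "posk S (KK d n \<sigma> N)" "symk S (KK d n \<sigma> N)" using KK_pos[OF ts N] by auto
  have "indom S (KK d n \<sigma> N) (\<lambda>X. Wout l * cnn_state \<sigma> \<gamma> W dd p nn N X 0 l)" for l
    by (rule indom_smult[OF net_indom[where \<sigma>=\<sigma> and N=N and dd=dd and p=p and nn=nn and d=d and n=n and k=N, OF ts sz N order_refl]])
  then have "indom S (KK d n \<sigma> N) (\<lambda>X. \<Sum>l<dd (Suc N) * p (Suc N). Wout l * cnn_state \<sigma> \<gamma> W dd p nn N X 0 l)"
    by (intro indom_sum[OF pK]) 
  moreover have "cnn_net N \<sigma> \<gamma> W Wout dd p nn = (\<lambda>X. \<Sum>l<dd (Suc N) * p (Suc N). Wout l * cnn_state \<sigma> \<gamma> W dd p nn N X 0 l)"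
    by (simp add: fun_eq_iff cnn_net_def mult.commute)
  ultimately obtain C where "domk S (KK d n \<sigma> N) (cnn_net N \<sigma> \<gamma> W Wout dd p nn) C"
    by (auto simp: indom_def)
  then show ?thesis by (rule dom_rkhs)
qed


lemma cont_coord: "continuous_on UNIV (\<lambda>X::image. X q j)"
  by (rule continuous_on_product_then_coordinatewise[OF continuous_on_product_coordinates])

lemma cont_abs_series: "taylor_decomp \<tau> \<Longrightarrow> continuous_on UNIV (abs_series \<tau>)"
  unfolding abs_series_eq[abs_def]
  by (intro continuous_at_imp_continuous_on ballI isCont_powser_converges_everywhere taylor_abs_summable)

lemma compact_box: "compact {X::image. \<forall>q j. X q j \<in> {-1..1}}"
proof -
  have inner: "compact (PiE (UNIV::nat set) (\<lambda>j. {-1..1::real}))"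
    using compactin_PiE[of "\<lambda>_. euclidean" UNIV "\<lambda>j. {-1..1::real}"]
    unfolding euclidean_product_topology by simp
  have "compact (PiE (UNIV::nat set) (\<lambda>q. PiE (UNIV::nat set) (\<lambda>j. {-1..1::real})))"
    using compactin_PiE[of "\<lambda>_. euclidean" UNIV "\<lambda>q. PiE (UNIV::nat set) (\<lambda>j. {-1..1::real})"] inner
    unfolding euclidean_product_topology by simp
  moreover have "PiE (UNIV::nat set) (\<lambda>q. PiE (UNIV::nat set) (\<lambda>j. {-1..1::real})) = {X::image. \<forall>q j. X q j \<in> {-1..1}}"
    by (auto simp: PiE_def Pi_def extensional_def)
  ultimately show ?thesis by simp
qed

lemma cont_sqsum: "continuous_on UNIV (\<lambda>X::image. \<Sum>j<d. (X q j)\<^sup>2)"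
  by (intro continuous_on_sum continuous_on_power cont_coord)

lemma closed_imp_eq: "closed {x::'a::topological_space. P \<longrightarrow> f x = (c::real)}" if "continuous_on UNIV f"
proof (cases P)
  case True then show ?thesis using closed_Collect_eq[OF that continuous_on_const] by simp
next
  case False then show ?thesis by simp
qed

lemma compact_sphere_images: "compact (sphere_images d n)"
proof -
  have cl: "closed (sphere_images d n)"
  proof -
    have "sphere_images d n = {X. \<forall>q. q < n \<longrightarrow> (\<Sum>j<d. (X q j)\<^sup>2) = 1} \<inter>
                              {X. \<forall>q j. (n \<le> q \<or> d \<le> j) \<longrightarrow> X q j = 0}"
      by (auto simp: sphere_images_def)
    moreover have "closed {X::image. \<forall>q. q < n \<longrightarrow> (\<Sum>j<d. (X q j)\<^sup>2) = 1}"
      by (intro closed_Collect_all closed_imp_eq cont_sqsum)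
    moreover have "closed {X::image. \<forall>q j. (n \<le> q \<or> d \<le> j) \<longrightarrow> X q j = 0}"
      by (intro closed_Collect_all closed_imp_eq cont_coord)
    ultimately show ?thesis by auto
  qed
  have sub: "sphere_images d n \<subseteq> {X::image. \<forall>q j. X q j \<in> {-1..1}}"
  proof (clarify)
    fix X :: image and q j assume X: "X \<in> sphere_images d n"
    show "X q j \<in> {-1..1}"
    proof (cases "q < n \<and> j < d")
      case True
      then have "(X q j)\<^sup>2 \<le> (\<Sum>j'<d. (X q j')\<^sup>2)"
        by (intro member_le_sum) auto
      also have "\<dots> = 1" using X True by (simp add: sphere_images_def)
      finally have "\<bar>X q j\<bar> \<le> 1" by (simp add: abs_square_le_1)
      then show ?thesis by auto
    next
      case False then show ?thesis using X by (auto simp: sphere_images_def)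
    qed
  qed
  have "compact ({X::image. \<forall>q j. X q j \<in> {-1..1}} \<inter> sphere_images d n)"
    by (rule compact_Int_closed[OF compact_box cl])
  moreover have "{X::image. \<forall>q j. X q j \<in> {-1..1}} \<inter> sphere_images d n = sphere_images d n"
    using sub by blast
  ultimately show ?thesis by simp
qed

lemma cont_K1: "taylor_decomp (\<sigma> 1) \<Longrightarrow> continuous_on UNIV (\<lambda>z::image \<times> image. K1 d n \<sigma> (fst z) (snd z))"
  unfolding K1_def Lk_def
  apply (intro continuous_on_sum)
  apply (rule continuous_on_compose2[OF cont_abs_series])
    apply assumption
   apply (intro continuous_on_sum continuous_on_mult)
    apply (rule continuous_on_compose2[OF cont_coord continuous_on_fst]; simp)
   apply (rule continuous_on_compose2[OF cont_coord continuous_on_snd]; simp)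
  apply simp
  done

lemma cont_KK:
  assumes ts: "\<forall>i\<in>{1..N}. taylor_decomp (\<sigma> i)"
  shows "1 \<le> k \<Longrightarrow> k \<le> N \<Longrightarrow> continuous_on UNIV (\<lambda>z::image \<times> image. KK d n \<sigma> k (fst z) (snd z))"
proof (induction k)
  case 0 then show ?case by simp
next
  case (Suc k)
  show ?case
  proof (cases "k = 0")
    case True then show ?thesis using cont_K1[of \<sigma>] ts Suc.prems by simp
  next
    case False
    have "continuous_on UNIV (\<lambda>z::image \<times> image. abs_series (\<sigma> (Suc k)) (KK d n \<sigma> k (fst z) (snd z)))"
      by (rule continuous_on_compose2[OF cont_abs_series]) (use ts Suc False in auto)
    then show ?thesis using False by simp
  qed
qed

lemma posk_series_drop:
  assumes ts: "taylor_decomp \<tau>" and L: "posk S L" "symk S L"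
  shows "posk S (\<lambda>x y. abs_series \<tau> (L x y) - \<bar>ac \<tau> s\<bar> * L x y ^ s)"
  unfolding posk_def
proof (intro allI impI)
  fix r assume r: "pts r \<subseteq> S"
  define \<beta> where "\<beta> t = (if t = s then 0 else \<bar>ac \<tau> t\<bar>)" for t
  have sm: "(\<lambda>t. \<beta> t * L x y ^ t) sums (abs_series \<tau> (L x y) - \<bar>ac \<tau> s\<bar> * L x y ^ s)" for x y
  proof -
    have "(\<lambda>t. \<bar>ac \<tau> t\<bar> * L x y ^ t - (if t = s then \<bar>ac \<tau> t\<bar> * L x y ^ t else 0)) sums
          (abs_series \<tau> (L x y) - \<bar>ac \<tau> s\<bar> * L x y ^ s)"
      by (intro sums_diff abs_series_sums[OF ts] sums_single)
    moreover have "(\<lambda>t. \<bar>ac \<tau> t\<bar> * L x y ^ t - (if t = s then \<bar>ac \<tau> t\<bar> * L x y ^ t else 0)) = (\<lambda>t. \<beta> t * L x y ^ t)"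
      by (auto simp: fun_eq_iff \<beta>_def)
    ultimately show ?thesis by simp
  qed
  have "(\<lambda>t. ip (\<lambda>x y. \<beta> t * L x y ^ t) r r) sums ip (\<lambda>x y. abs_series \<tau> (L x y) - \<bar>ac \<tau> s\<bar> * L x y ^ s) r r"
    by (rule ip_sums) (rule sm)
  moreover have "0 \<le> ip (\<lambda>x y. \<beta> t * L x y ^ t) r r" for t
    using posk_pow[OF L, of t] r by (simp add: ip_cmult_kernel posk_def \<beta>_def)
  ultimately show "0 \<le> ip (\<lambda>x y. abs_series \<tau> (L x y) - \<bar>ac \<tau> s\<bar> * L x y ^ s) r r"
    by (rule sums_nonneg)
qed

lemma dom_to_series:
  assumes ts: "taylor_decomp \<tau>" and bp: "ac \<tau> s \<noteq> 0"
    and L: "posk S L" "symk S L" and f: "domk S (\<lambda>x y. L x y ^ s) g C"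
  shows "domk S (\<lambda>x y. abs_series \<tau> (L x y)) g (C / \<bar>ac \<tau> s\<bar>)"
proof -
  have b: "0 < \<bar>ac \<tau> s\<bar>" using bp by simp
  have sf: "symk S (\<lambda>x y. abs_series \<tau> (L x y))" using L(2) by (simp add: symk_def)
  show ?thesis
    by (rule dom_mono[OF dom_kscale[OF f b] sf posk_series_drop[OF ts L]])
qed


lemma Lk_pos: "posk S (Lk d q) \<and> symk S (Lk d q)"
  using dom_Lk[of S d q "\<lambda>_. 0"] by (auto simp: domk_def)

lemma K1_ge_const:
  assumes ts: "taylor_decomp (\<sigma> 1)" and n: "0 < n"
  shows "posk S (\<lambda>X Y. K1 d n \<sigma> X Y - \<bar>ac (\<sigma> 1) 0\<bar>)"
proof -
  have a: "posk S (\<lambda>X Y. K1 d n \<sigma> X Y - abs_series (\<sigma> 1) (Lk d 0 X Y))"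
    by (rule K1_ge[of \<sigma>, OF ts n])
  have b: "posk S (\<lambda>X Y. abs_series (\<sigma> 1) (Lk d 0 X Y) - \<bar>ac (\<sigma> 1) 0\<bar> * Lk d 0 X Y ^ 0)"
    using posk_series_drop[OF ts, of S "Lk d 0" 0] Lk_pos by blast
  have "posk S (\<lambda>X Y. (K1 d n \<sigma> X Y - abs_series (\<sigma> 1) (Lk d 0 X Y)) +
                       (abs_series (\<sigma> 1) (Lk d 0 X Y) - \<bar>ac (\<sigma> 1) 0\<bar> * Lk d 0 X Y ^ 0))"
    by (rule posk_add[OF a b])
  then show ?thesis by simp
qed

lemma lift1:
  assumes ts: "taylor_decomp (\<sigma> 1)" and n: "0 < n" and b: "ac (\<sigma> 1) 0 \<noteq> 0"
    and f: "domk S (\<lambda>X Y. K1 d n \<sigma> X Y ^ s) g C"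
  shows "domk S (\<lambda>X Y. K1 d n \<sigma> X Y ^ Suc s) g (C / \<bar>ac (\<sigma> 1) 0\<bar>)"
proof -
  define b0 where "b0 = \<bar>ac (\<sigma> 1) 0\<bar>"
  have bp: "0 < b0" using b by (simp add: b0_def)
  have pK: "posk S (K1 d n \<sigma>)" "symk S (K1 d n \<sigma>)" using K1_pos[of \<sigma>, OF ts] by auto
  have sm: "symk S (\<lambda>X Y. K1 d n \<sigma> X Y - b0)" using pK(2) by (simp add: symk_def)
  have "posk S (\<lambda>X Y. K1 d n \<sigma> X Y ^ s * (K1 d n \<sigma> X Y - b0))"
    by (rule posk_mult[OF posk_pow[OF pK] K1_ge_const[of \<sigma>, OF ts n, unfolded b0_def[symmetric]] sm])
  moreover have "(\<lambda>X Y. K1 d n \<sigma> X Y ^ s * (K1 d n \<sigma> X Y - b0)) =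
                 (\<lambda>X Y. K1 d n \<sigma> X Y ^ Suc s - b0 * K1 d n \<sigma> X Y ^ s)"
    by (simp add: fun_eq_iff algebra_simps)
  ultimately have d: "posk S (\<lambda>X Y. K1 d n \<sigma> X Y ^ Suc s - b0 * K1 d n \<sigma> X Y ^ s)" by simp
  from dom_mono[OF dom_kscale[OF f bp] symk_pow[OF pK(2)] d] show ?thesis by (simp add: b0_def)
qed

lemma liftn:
  assumes ts: "taylor_decomp (\<sigma> 1)" and n: "0 < n" and b: "ac (\<sigma> 1) 0 \<noteq> 0"
  shows "domk S (\<lambda>X Y. K1 d n \<sigma> X Y ^ s) g C \<Longrightarrow> \<exists>C'. domk S (\<lambda>X Y. K1 d n \<sigma> X Y ^ (s + j)) g C'"
proof (induction j)
  case 0 then show ?case by auto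
next
  case (Suc j)
  then obtain C' where "domk S (\<lambda>X Y. K1 d n \<sigma> X Y ^ (s + j)) g C'" by auto
  from lift1[OF ts n b this] show ?case by auto
qed

lemma KK_up:
  assumes ts: "\<forall>i\<in>{1..N}. taylor_decomp (\<sigma> i)"
    and nz: "\<forall>i\<in>{1..N}. \<forall>t. ac (\<sigma> i) t \<noteq> 0"
  shows "domk S (KK d n \<sigma> 2) g C \<Longrightarrow> 2 + j \<le> N \<Longrightarrow> \<exists>C'. domk S (KK d n \<sigma> (2 + j)) g C'"
proof (induction j)
  case 0 then show ?case by auto
next
  case (Suc j)
  then obtain C' where f: "domk S (KK d n \<sigma> (2 + j)) g C'" by auto
  have f1: "domk S (\<lambda>x y. KK d n \<sigma> (2 + j) x y ^ 1) g C'" using f by simp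
  have pk: "posk S (KK d n \<sigma> (2 + j))" "symk S (KK d n \<sigma> (2 + j))" using f by (auto simp: domk_def)
  have t: "taylor_decomp (\<sigma> (Suc (2 + j)))" and z: "ac (\<sigma> (Suc (2 + j))) 1 \<noteq> 0"
    using ts nz Suc.prems by auto
  from dom_to_series[OF t z pk f1] show ?case by auto
qed

lemma sep_coord:
  assumes ts: "taylor_decomp (\<sigma> 1)" and b1: "ac (\<sigma> 1) 1 \<noteq> 0" and q: "q < n" and j: "j < d"
  shows "\<exists>C. domk S (\<lambda>X Y. K1 d n \<sigma> X Y ^ 1) (\<lambda>X. X q j) C"
proof -
  have e: "(\<lambda>X. \<Sum>m<d. X q m * (if m = j then 1 else 0)) = (\<lambda>X::image. X q j)"
    using j by (simp add: fun_eq_iff if_distrib[of "\<lambda>x. _ * x"] sum.delta' cong: if_cong)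
  have "domk S (Lk d q) (\<lambda>X. X q j) (\<Sum>m<d. ((if m = j then 1 else 0::real))\<^sup>2)"
    using dom_Lk[of S d q "\<lambda>m. if m = j then 1 else 0"] e by simp
  then have "domk S (\<lambda>x y. Lk d q x y ^ 1) (\<lambda>X. X q j) (\<Sum>m<d. ((if m = j then 1 else 0::real))\<^sup>2)"
    by simp
  from dom_to_series[OF ts b1 conjunct1[OF Lk_pos] conjunct2[OF Lk_pos] this]
  obtain C where c: "domk S (\<lambda>x y. abs_series (\<sigma> 1) (Lk d q x y)) (\<lambda>X. X q j) C" by blast
  have pK: "symk S (K1 d n \<sigma>)" using K1_pos[of \<sigma>, OF ts] by auto
  from dom_mono[OF c pK K1_ge[of \<sigma>, OF ts q]] show ?thesis by auto
qed

lemma KK2: "KK d n \<sigma> 2 = (\<lambda>X Y. abs_series (\<sigma> 2) (K1 d n \<sigma> X Y))"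
  by (simp add: numeral_2_eq_2)

lemma universal:
  assumes ts: "\<forall>i\<in>{1..N}. taylor_decomp (\<sigma> i)"
    and nz: "\<forall>i\<in>{1..N}. \<forall>t. (deriv ^^ t) (\<sigma> i) 0 \<noteq> 0"
    and N: "2 \<le> N" and n: "1 \<le> n"
  shows "c_universal (sphere_images d n) (KK d n \<sigma> N)"
proof -
  define S where "S = sphere_images d n"
  have nzac: "\<forall>i\<in>{1..N}. \<forall>t. ac (\<sigma> i) t \<noteq> 0" using nz by (simp add: ac_def)
  have ts1: "taylor_decomp (\<sigma> 1)" and ts2: "taylor_decomp (\<sigma> 2)" using ts N by auto
  have nz1: "ac (\<sigma> 1) t \<noteq> 0" and nz2: "ac (\<sigma> 2) t \<noteq> 0" for t using nzac N by auto
  have n0: "0 < n" using n by simp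
  have pK1: "posk S (K1 d n \<sigma>)" "symk S (K1 d n \<sigma>)" using K1_pos[of \<sigma>, OF ts1] by auto
  have cont: "continuous_on (S \<times> S) (\<lambda>(x, y). KK d n \<sigma> N x y)"
  proof -
    have "continuous_on UNIV (\<lambda>z::image \<times> image. KK d n \<sigma> N (fst z) (snd z))"
      by (rule cont_KK[OF ts]) (use N in auto)
    then have "continuous_on (S \<times> S) (\<lambda>z::image \<times> image. KK d n \<sigma> N (fst z) (snd z))"
      by (rule continuous_on_subset) auto
    then show ?thesis by (simp add: split_def)
  qed
  define P where "P f \<longleftrightarrow> continuous_on S f \<and> (\<exists>s C. domk S (\<lambda>X Y. K1 d n \<sigma> X Y ^ s) f C)" for f
  have dense: "\<exists>h\<in>rkhs S (KK d n \<sigma> N). \<forall>x\<in>S. \<bar>g x - h x\<bar> < \<epsilon>"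
    if g: "continuous_on S g" and e: "0 < \<epsilon>" for g \<epsilon>
  proof -
    have "\<exists>h. P h \<and> (\<forall>x\<in>S. \<bar>g x - h x\<bar> < \<epsilon>)"
    proof (rule Stone_Weierstrass_HOL[of S P g \<epsilon>])
      show "compact S" unfolding S_def by (rule compact_sphere_images)
      show "P (\<lambda>x. c)" for c
      proof -
        have "domk S (\<lambda>X Y. K1 d n \<sigma> X Y ^ 0) (\<lambda>x. c) (c\<^sup>2)"
          using dom_smult[OF dom_one, of S c] by simp
        then show ?thesis unfolding P_def using continuous_on_const by blast
      qed
      show "continuous_on S f" if "P f" for f using that by (simp add: P_def)
      show "P (\<lambda>x. f x + h x)" if Pfh: "P f \<and> P h" for f h
      proof -
        obtain s C s' C' where f: "domk S (\<lambda>X Y. K1 d n \<sigma> X Y ^ s) f C"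
          and h: "domk S (\<lambda>X Y. K1 d n \<sigma> X Y ^ s') h C'"
          and cf: "continuous_on S f" and ch: "continuous_on S h"
          using Pfh unfolding P_def by blast
        obtain C1 where f1: "domk S (\<lambda>X Y. K1 d n \<sigma> X Y ^ (s + s')) f C1"
          using liftn[OF ts1 n0 nz1 f] by blast
        obtain C2 where h1: "domk S (\<lambda>X Y. K1 d n \<sigma> X Y ^ (s' + s)) h C2"
          using liftn[OF ts1 n0 nz1 h] by blast
        have "domk S (\<lambda>X Y. K1 d n \<sigma> X Y ^ (s + s')) (\<lambda>x. f x + h x) (2 * C1 + 2 * C2)"
          by (rule dom_add1[OF f1]) (use h1 in \<open>simp add: add.commute\<close>)
        then show ?thesis unfolding P_def using cf ch by (auto intro: continuous_on_add)
      qed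
      show "P (\<lambda>x. f x * h x)" if Pfh: "P f \<and> P h" for f h
      proof -
        obtain s C s' C' where f: "domk S (\<lambda>X Y. K1 d n \<sigma> X Y ^ s) f C"
          and h: "domk S (\<lambda>X Y. K1 d n \<sigma> X Y ^ s') h C'"
          and cf: "continuous_on S f" and ch: "continuous_on S h"
          using Pfh unfolding P_def by blast
        have "domk S (\<lambda>X Y. K1 d n \<sigma> X Y ^ s * K1 d n \<sigma> X Y ^ s') (\<lambda>x. f x * h x) (C * C')"
          by (rule dom_mult[OF f h])
        then have "domk S (\<lambda>X Y. K1 d n \<sigma> X Y ^ (s + s')) (\<lambda>x. f x * h x) (C * C')"
          by (simp add: power_add)
        then show ?thesis unfolding P_def using cf ch by (auto intro: continuous_on_mult)
      qed
      show "\<exists>f. P f \<and> f x \<noteq> f y" if xy: "x \<in> S \<and> y \<in> S \<and> x \<noteq> y" for x y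
      proof -
        obtain q j where qj: "x q j \<noteq> y q j" using xy by (auto simp: fun_eq_iff)
        have "q < n \<and> j < d"
        proof (rule ccontr)
          assume "\<not> (q < n \<and> j < d)"
          then have "n \<le> q \<or> d \<le> j" by auto
          then have "x q j = 0" "y q j = 0" using xy unfolding S_def sphere_images_def by auto
          with qj show False by simp
        qed
        then obtain C where "domk S (\<lambda>X Y. K1 d n \<sigma> X Y ^ 1) (\<lambda>X. X q j) C"
          using sep_coord[of \<sigma>, OF ts1 nz1] by blast
        moreover have "continuous_on S (\<lambda>X::image. X q j)"
          by (rule continuous_on_subset[OF cont_coord]) simp
        ultimately show ?thesis using qj unfolding P_def by blast
      qed
    qed (use g e in auto)
    then obtain h where Ph: "P h" and hg: "\<forall>x\<in>S. \<bar>g x - h x\<bar> < \<epsilon>" by blast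
    then obtain s C where "domk S (\<lambda>X Y. K1 d n \<sigma> X Y ^ s) h C" by (auto simp: P_def)
    from dom_to_series[OF ts2 nz2 pK1 this]
    have h2: "domk S (KK d n \<sigma> 2) h (C / \<bar>ac (\<sigma> 2) s\<bar>)" by (simp add: KK2)
    have e: "2 + (N - 2) = N" using N by simp
    have "\<exists>C'. domk S (KK d n \<sigma> (2 + (N - 2))) h C'"
      by (rule KK_up[OF ts nzac h2]) (simp only: e)
    then obtain C' where "domk S (KK d n \<sigma> N) h C'" unfolding e by blast
    then have "h \<in> rkhs S (KK d n \<sigma> N)" by (rule dom_rkhs)
    then show ?thesis using hg by blast
  qed
  show ?thesis unfolding c_universal_def S_def[symmetric] using cont dense by blast
qed


theorem mainTheorem1:
  fixes d n N :: nat and \<sigma> :: "nat \<Rightarrow> real \<Rightarrow> real"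
  assumes "2 \<le> d" and "1 \<le> n" and "2 \<le> N"
    and "\<forall>i\<in>{1..N}. taylor_decomp (\<sigma> i)"
  shows "psd_kernel (sphere_images d n) (cnn_kernel d n N \<sigma>)
       \<and> (\<forall>dd nn \<gamma>. cnn_sizes_ok d n N dd nn \<longrightarrow>
            cnn_family N \<sigma> dd nn \<gamma> \<subseteq> rkhs (sphere_images d n) (cnn_kernel d n N \<sigma>))
       \<and> ((\<forall>i\<in>{1..N}. \<forall>t. (deriv ^^ t) (\<sigma> i) 0 \<noteq> 0) \<longrightarrow>
            c_universal (sphere_images d n) (cnn_kernel d n N \<sigma>))"
proof -
  have N1: "1 \<le> N" using assms(3) by simp
  have ck: "cnn_kernel d n N \<sigma> = KK d n \<sigma> N" by (rule cnn_kernel_KK[OF N1])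
  have p1: "psd_kernel (sphere_images d n) (cnn_kernel d n N \<sigma>)"
    unfolding ck using KK_pos[OF assms(4) N1] psd_from_posk by blast
  have p2: "\<forall>dd nn \<gamma>. cnn_sizes_ok d n N dd nn \<longrightarrow>
            cnn_family N \<sigma> dd nn \<gamma> \<subseteq> rkhs (sphere_images d n) (cnn_kernel d n N \<sigma>)"
  proof (intro allI impI subsetI)
    fix dd nn \<gamma> f
    assume sz: "cnn_sizes_ok d n N dd nn" and f: "f \<in> cnn_family N \<sigma> dd nn \<gamma>"
    from f obtain p W Wout where fe: "f = cnn_net N \<sigma> \<gamma> W Wout dd p nn" and p1: "p 1 = 1"
      by (auto simp: cnn_family_def)
    have s1: "dd 1 = d" "nn 1 = n" using sz by (auto simp: cnn_sizes_ok_def)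
    show "f \<in> rkhs (sphere_images d n) (cnn_kernel d n N \<sigma>)"
      unfolding ck fe
      by (rule net_rkhs[where \<sigma>=\<sigma> and N=N and d=d and n=n and dd=dd and p=p and nn=nn, OF assms(4) N1 s1(1) p1 s1(2)])
  qed
  have p3: "(\<forall>i\<in>{1..N}. \<forall>t. (deriv ^^ t) (\<sigma> i) 0 \<noteq> 0) \<longrightarrow>
            c_universal (sphere_images d n) (cnn_kernel d n N \<sigma>)"
    unfolding ck using universal[OF assms(4) _ assms(3) assms(2)] by blast
  show ?thesis using p1 p2 p3 by blast
qed


end
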